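(* Let $\lambda>0$, $L\ge1$, and let $\Sigma\in\mathbb{R}^{d\times d}$ be symmetric positive definite with simple spectrum $\sigma_1>\cdots>\sigma_d>0$ and unit eigenvectors $u_1,\dots,u_d$. With $a(\mu)=\mu^\top\Sigma\mu$, $b(\mu)=\mu^\top\Sigma^2\mu$, let \[ \mathcal{R}_{\mathrm{lin},L}(\mu)=\operatorname{tr}(\Sigma)-\tfrac{2\lambda}{L}\operatorname{tr}(\Sigma)a-\tfrac{2\lambda(L+1)}{L}b+\tfrac{\lambda^2(L+2)}{L^2}\operatorname{tr}(\Sigma)a^2+\tfrac{\lambda^2(L+2)(L+3)}{L^2}ab. \] Then $\mathcal{R}_{\mathrm{lin},L}$ is coercive and locally Lipschitz, and the gradient flow $\dot\mu(t)=-\nabla\mathcal{R}_{\mathrm{lin},L}(\mu(t))$ converges to a critical point of $\mathcal{R}_{\mathrm{lin},L}$. For almost every initialization it converges to one of the two global minimizers $\mu^\star=\pm\alpha_1^\star u_1$, where \[ \alpha_1^\star=\sqrt{\frac{\operatorname{tr}(\Sigma)+(L+1)\sigma_1}{\frac{\lambda}{L}\sigma_1(L+2)(\operatorname{tr}(\Sigma)+(L+3)\sigma_1)}}, \] so that $\mu^\star/\|\mu^\star\|=\pm u_1$. Moreover \[ \sigma_1=-\frac{-2\operatorname{tr}(\Sigma)+2\frac{\lambda}{L}(L+2)\operatorname{tr}(\Sigma)\,\mu^{\star\top}\Sigma\mu^\star+\frac{\lambda}{L}(L+2)(L+3)\,\mu^{\star\top}\Sigma^2\mu^\star}{-2(L+1)+\frac{\lambda}{L}(L+2)(L+3)\,\mu^{\star\top}\Sigma\mu^\star}.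 \]
   Context: $\mathcal{R}_{\mathrm{lin},L}(\mu)$ equals $\mathbb{E}\|X_1-\frac{\lambda}{L}\sum_{k=1}^L(X_1^\top\mu\mu^\top X_k)X_k\|^2$ for $X_1,\dots,X_L$ i.i.d. $\mathcal{N}(0,\Sigma)$. *)

theory Defs
  imports "HOL-Analysis.Analysis"
begin

definition R_lin :: "real \<Rightarrow> nat \<Rightarrow> real^'n^'n \<Rightarrow> real^'n \<Rightarrow> real" where
  "R_lin lam L S mu =
     (let a = mu \<bullet> (S *v mu); b = mu \<bullet> ((S ** S) *v mu); tr = trace S; l = real L in
        tr - 2 * lam / l * tr * a - 2 * lam * (l + 1) / l * b
        + lam\<^sup>2 * (l + 2) / l\<^sup>2 * tr * a\<^sup>2
        + lam\<^sup>2 * (l + 2) * (l + 3) / l\<^sup>2 * a * b)"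

definition locally_lipschitz :: "('a::metric_space \<Rightarrow> 'b::metric_space) \<Rightarrow> bool" where
  "locally_lipschitz f \<longleftrightarrow> (\<forall>x. \<exists>e>0. \<exists>C. C-lipschitz_on (ball x e) f)"

definition grad_flow :: "('a::real_inner \<Rightarrow> real) \<Rightarrow> (real \<Rightarrow> 'a) \<Rightarrow> 'a \<Rightarrow> bool" where
  "grad_flow f mu mu0 \<longleftrightarrow> mu 0 = mu0 \<and>
     (\<forall>t\<ge>0. \<exists>g. (GDERIV f (mu t) :> g) \<and> (mu has_vector_derivative (- g)) (at t within {0..}))"

definition critical_point :: "('a::real_inner \<Rightarrow> real) \<Rightarrow> 'a \<Rightarrow> bool" where
  "critical_point f p \<longleftrightarrow> (GDERIV f p :> 0)"

definition alpha1_star :: "real \<Rightarrow> nat \<Rightarrow> real^'n^'n \<Rightarrow> real \<Rightarrow> real" where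
  "alpha1_star lam L S s1 =
     sqrt ((trace S + (real L + 1) * s1) /
           (lam / real L * s1 * (real L + 2) * (trace S + (real L + 3) * s1)))"

end

theory Submission
  imports Defs
begin


lemma deriv_nonpos_mono:
  fixes f :: "real \<Rightarrow> real"
  assumes "0 \<le> a" "a \<le> b"
    and d: "\<And>t. a \<le> t \<Longrightarrow> t \<le> b \<Longrightarrow> (f has_real_derivative f' t) (at t within {0..})"
    and n: "\<And>t. a \<le> t \<Longrightarrow> t \<le> b \<Longrightarrow> f' t \<le> 0"
  shows "f b \<le> f a"
proof -
  have "(-f) a \<le> (-f) b"
  proof (rule DERIV_nonneg_imp_increasing_open[OF assms(2)])
    fix x assume x: "a < x" "x < b"
    have "at x within {0..} = at x" using x assms(1) by (intro at_within_interior) auto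
    then have "(f has_real_derivative f' x) (at x)" using d[of x] x by auto
    then have "((-f) has_real_derivative - f' x) (at x)"
      using DERIV_minus[of f "f' x" x] by (simp add: fun_Compl_def)
    then show "\<exists>y. ((-f) has_real_derivative y) (at x) \<and> 0 \<le> y" using n[of x] x by force
  next
    have "continuous_on {a..b} f"
      unfolding continuous_on_eq_continuous_within
    proof
      fix t assume t: "t \<in> {a..b}"
      have "continuous (at t within {0..}) f"
        using d[of t] t by (auto intro: DERIV_continuous)
      then show "continuous (at t within {a..b}) f"
        by (rule continuous_within_subset) (use assms(1) in auto)
    qed
    then show "continuous_on {a..b} (-f)" by (simp add: fun_Compl_def continuous_on_minus)
  qed
  then show ?thesis by simp
qed

lemma lip_scaleR:
  fixes f :: "'a::metric_space \<Rightarrow> real" and g :: "'a \<Rightarrow> 'b::real_normed_vector"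
  assumes "Lf-lipschitz_on K f" "Lg-lipschitz_on K g"
    and "\<And>x. x \<in> K \<Longrightarrow> \<bar>f x\<bar> \<le> Bf" "\<And>x. x \<in> K \<Longrightarrow> norm (g x) \<le> Bg"
    and "0 \<le> Bf" "0 \<le> Bg"
  shows "(Lf*Bg + Bf*Lg)-lipschitz_on K (\<lambda>x. f x *\<^sub>R g x)"
proof (rule lipschitz_onI)
  have "0 \<le> Lf" "0 \<le> Lg" using assms(1,2) lipschitz_on_nonneg by auto
  then show "0 \<le> Lf*Bg + Bf*Lg" using assms(5,6) by simp
  fix x y assume xy: "x \<in> K" "y \<in> K"
  have "f x *\<^sub>R g x - f y *\<^sub>R g y = (f x - f y) *\<^sub>R g x + f y *\<^sub>R (g x - g y)"
    by (simp add: algebra_simps)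
  then have "norm (f x *\<^sub>R g x - f y *\<^sub>R g y) \<le> \<bar>f x - f y\<bar> * norm (g x) + \<bar>f y\<bar> * norm (g x - g y)"
    by (metis norm_scaleR norm_triangle_ineq)
  also have "\<dots> \<le> (Lf * dist x y) * Bg + Bf * (Lg * dist x y)"
    apply (intro add_mono mult_mono)
    using lipschitz_onD[OF assms(1) xy] lipschitz_onD[OF assms(2) xy] assms(3)[OF xy(2)] assms(4)[OF xy(1)] assms(5,6) \<open>0 \<le> Lf\<close> \<open>0 \<le> Lg\<close>
    by (auto simp: dist_norm dist_real_def)
  finally show "dist (f x *\<^sub>R g x) (f y *\<^sub>R g y) \<le> (Lf*Bg + Bf*Lg) * dist x y"
    by (simp add: dist_norm algebra_simps)
qed

lemma lip_inner:
  fixes f g :: "'a::metric_space \<Rightarrow> 'b::real_inner"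
  assumes "Lf-lipschitz_on K f" "Lg-lipschitz_on K g"
    and "\<And>x. x \<in> K \<Longrightarrow> norm (f x) \<le> Bf" "\<And>x. x \<in> K \<Longrightarrow> norm (g x) \<le> Bg"
    and "0 \<le> Bf" "0 \<le> Bg"
  shows "(Lf*Bg + Bf*Lg)-lipschitz_on K (\<lambda>x. f x \<bullet> g x)"
proof (rule lipschitz_onI)
  have "0 \<le> Lf" "0 \<le> Lg" using assms(1,2) lipschitz_on_nonneg by auto
  then show "0 \<le> Lf*Bg + Bf*Lg" using assms(5,6) by simp
  fix x y assume xy: "x \<in> K" "y \<in> K"
  have "f x \<bullet> g x - f y \<bullet> g y = (f x - f y) \<bullet> g x + f y \<bullet> (g x - g y)"
    by (simp add: algebra_simps inner_diff_left inner_diff_right)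
  then have "\<bar>f x \<bullet> g x - f y \<bullet> g y\<bar> \<le> norm (f x - f y) * norm (g x) + norm (f y) * norm (g x - g y)"
    by (smt (verit) Cauchy_Schwarz_ineq2)
  also have "\<dots> \<le> (Lf * dist x y) * Bg + Bf * (Lg * dist x y)"
    apply (intro add_mono mult_mono)
    using lipschitz_onD[OF assms(1) xy] lipschitz_onD[OF assms(2) xy] assms(3)[OF xy(2)] assms(4)[OF xy(1)] assms(5,6) \<open>0 \<le> Lf\<close> \<open>0 \<le> Lg\<close>
    by (auto simp: dist_norm dist_real_def)
  finally show "dist (f x \<bullet> g x) (f y \<bullet> g y) \<le> (Lf*Bg + Bf*Lg) * dist x y"
    by (simp add: dist_real_def algebra_simps)
qed

lemma cont_bounded_cball:
  fixes f :: "'a::euclidean_space \<Rightarrow> 'b::real_normed_vector"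
  assumes "continuous_on (cball c r) f"
  obtains B where "0 \<le> B" "\<And>x. x \<in> cball c r \<Longrightarrow> norm (f x) \<le> B"
proof -
  have "bounded (f ` cball c r)"
    using assms by (intro compact_imp_bounded compact_continuous_image) auto
  then obtain B where "B > 0" "\<forall>y\<in>f ` cball c r. norm y \<le> B" by (auto simp: bounded_pos)
  then show ?thesis using that[of B] by auto
qed

lemma sym_inner:
  fixes M :: "real^'n^'n"
  assumes "transpose M = M"
  shows "(M *v x) \<bullet> y = x \<bullet> (M *v y)"
proof -
  have "M *v x = x v* M" using vector_transpose_matrix[of x M] assms by simp
  then show ?thesis by (simp add: dot_lmul_matrix)
qed


locale P16 =
  fixes lam :: real and L :: nat and S :: "real^'n^'n"
    and \<sigma> :: "nat \<Rightarrow> real" and u :: "nat \<Rightarrow> real^'n"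
  assumes lam_pos: "lam > 0"
    and L_ge: "L \<ge> 1"
    and sym: "transpose S = S"
    and posdef: "\<And>x. x \<noteq> 0 \<Longrightarrow> x \<bullet> (S *v x) > 0"
    and simple: "\<And>i j. 1 \<le> i \<Longrightarrow> i < j \<Longrightarrow> j \<le> CARD('n) \<Longrightarrow> \<sigma> j < \<sigma> i"
    and last_pos: "\<sigma> CARD('n) > 0"
    and eigvec: "\<And>i. 1 \<le> i \<Longrightarrow> i \<le> CARD('n) \<Longrightarrow> S *v u i = \<sigma> i *\<^sub>R u i"
    and unit: "\<And>i. 1 \<le> i \<Longrightarrow> i \<le> CARD('n) \<Longrightarrow> norm (u i) = 1"
begin


lemma one_in_I: "1 \<in> {1..CARD('n)}"
  by (simp add: Suc_leI)

lemma sig_pos: "i \<in> {1..CARD('n)} \<Longrightarrow> \<sigma> i > 0"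
  using simple[of i "CARD('n)"] last_pos by (cases "i = CARD('n)") auto

lemma sig_inj: "i \<in> {1..CARD('n)} \<Longrightarrow> j \<in> {1..CARD('n)} \<Longrightarrow> \<sigma> i = \<sigma> j \<Longrightarrow> i = j"
  using simple[of i j] simple[of j i] by (cases i j rule: linorder_cases) auto

lemma sig1_max: "i \<in> {1..CARD('n)} \<Longrightarrow> i \<noteq> 1 \<Longrightarrow> \<sigma> i < \<sigma> 1"
  using simple[of 1 i] by auto

lemma sig1_ge: "i \<in> {1..CARD('n)} \<Longrightarrow> \<sigma> i \<le> \<sigma> 1"
  using sig1_max[of i] by (cases "i = 1") auto

lemma symS: "(S *v x) \<bullet> y = x \<bullet> (S *v y)"
  using sym_inner[OF sym] .

lemma SS_eq: "(S ** S) *v x = S *v (S *v x)"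
  by (simp add: matrix_vector_mul_assoc)

lemma u_S: "i \<in> {1..CARD('n)} \<Longrightarrow> u i \<bullet> (S *v x) = \<sigma> i * (u i \<bullet> x)"
  using symS[of "u i" x, symmetric] eigvec[of i] by auto

lemma u_SS: "i \<in> {1..CARD('n)} \<Longrightarrow> u i \<bullet> ((S ** S) *v x) = (\<sigma> i)\<^sup>2 * (u i \<bullet> x)"
  by (simp add: SS_eq u_S power2_eq_square)

lemma u_unit: "i \<in> {1..CARD('n)} \<Longrightarrow> u i \<bullet> u i = 1"
  using unit[of i] by (simp add: dot_square_norm)

lemma u_orth: "i \<in> {1..CARD('n)} \<Longrightarrow> j \<in> {1..CARD('n)} \<Longrightarrow> i \<noteq> j \<Longrightarrow> u i \<bullet> u j = 0"
proof -
  assume ij: "i \<in> {1..CARD('n)}" "j \<in> {1..CARD('n)}" "i \<noteq> j"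
  have "\<sigma> i * (u i \<bullet> u j) = \<sigma> j * (u i \<bullet> u j)"
    using u_S[OF ij(1), of "u j"] u_S[OF ij(2), of "u i"] eigvec[of i] eigvec[of j] ij
    by (auto simp: inner_commute)
  moreover have "\<sigma> i \<noteq> \<sigma> j" using sig_inj ij by auto
  ultimately show ?thesis by auto
qed

lemma u_inner: "i \<in> {1..CARD('n)} \<Longrightarrow> j \<in> {1..CARD('n)} \<Longrightarrow> u i \<bullet> u j = (if i = j then 1 else 0)"
  using u_orth u_unit by auto

lemma u_inj: "inj_on u {1..CARD('n)}"
  by (rule inj_onI) (metis u_inner zero_neq_one)

lemma sum_coord: "j \<in> {1..CARD('n)} \<Longrightarrow> (\<Sum>i\<in>{1..CARD('n)}. f i * (u j \<bullet> u i)) = f j"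
proof -
  assume j: "j \<in> {1..CARD('n)}"
  have "(\<Sum>i\<in>{1..CARD('n)}. f i * (u j \<bullet> u i)) = (\<Sum>i\<in>{1..CARD('n)}. if i = j then f i else 0)"
    by (rule sum.cong) (use j u_inner in auto)
  also have "\<dots> = f j" using j by simp
  finally show ?thesis .
qed

lemma expand: "x = (\<Sum>i\<in>{1..CARD('n)}. (u i \<bullet> x) *\<^sub>R u i)"
proof (rule ccontr)
  define r where "r = x - (\<Sum>i\<in>{1..CARD('n)}. (u i \<bullet> x) *\<^sub>R u i)"
  assume "x \<noteq> (\<Sum>i\<in>{1..CARD('n)}. (u i \<bullet> x) *\<^sub>R u i)"
  then have r0: "r \<noteq> 0" by (simp add: r_def)
  have ur: "u j \<bullet> r = 0" if j: "j \<in> {1..CARD('n)}" for j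
  proof -
    have "u j \<bullet> (\<Sum>i\<in>{1..CARD('n)}. (u i \<bullet> x) *\<^sub>R u i) = (\<Sum>i\<in>{1..CARD('n)}. (u i \<bullet> x) * (u j \<bullet> u i))"
      by (simp add: inner_sum_right)
    also have "\<dots> = u j \<bullet> x" using sum_coord[OF j] .
    finally show ?thesis by (simp add: r_def inner_diff_right)
  qed
  define U where "U = insert r (u ` {1..CARD('n)})"
  have "pairwise orthogonal U"
    unfolding U_def pairwise_def orthogonal_def
    using ur u_orth by (auto simp: inner_commute) metis
  moreover have "0 \<notin> U"
    unfolding U_def using r0 unit by force
  ultimately have "independent U" by (rule pairwise_orthogonal_independent)
  then have "card U \<le> DIM(real^'n)" using independent_bound by blast
  moreover have "r \<notin> u ` {1..CARD('n)}"
  proof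
    assume "r \<in> u ` {1..CARD('n)}"
    then obtain j where "j \<in> {1..CARD('n)}" "r = u j" by auto
    then show False using ur[of j] u_unit[of j] by simp
  qed
  then have "card U = Suc (CARD('n))"
    unfolding U_def using card_image[OF u_inj] by simp
  ultimately show False by simp
qed

lemma parseval: "x \<bullet> y = (\<Sum>i\<in>{1..CARD('n)}. (u i \<bullet> x) * (u i \<bullet> y))"
proof -
  have "x \<bullet> y = x \<bullet> (\<Sum>i\<in>{1..CARD('n)}. (u i \<bullet> y) *\<^sub>R u i)" using expand[of y] by simp
  also have "\<dots> = (\<Sum>i\<in>{1..CARD('n)}. (u i \<bullet> x) * (u i \<bullet> y))"
    by (simp add: inner_sum_right inner_commute mult.commute)
  finally show ?thesis .
qed

lemma norm2_coord: "(norm x)\<^sup>2 = (\<Sum>i\<in>{1..CARD('n)}. (u i \<bullet> x)\<^sup>2)"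
  using parseval[of x x] by (metis (no_types, lifting) power2_norm_eq_inner power2_eq_square sum.cong)

end


context P16 begin

definition kk where "kk = lam / real L"
definition TT where "TT = trace S"
definition ra where "ra x = x \<bullet> (S *v x)"
definition rb where "rb x = x \<bullet> ((S ** S) *v x)"
definition Phi where "Phi p q = TT - 2*kk*TT*p - 2*kk*(real L+1)*q + kk^2*(real L+2)*TT*p^2 + kk^2*(real L+2)*(real L+3)*p*q"
definition gA where "gA x = -2*kk*TT + 2*kk^2*(real L+2)*TT*ra x + kk^2*(real L+2)*(real L+3)*rb x"
definition gB where "gB x = -2*kk*(real L+1) + kk^2*(real L+2)*(real L+3)*ra x"
definition grad where "grad x = (2*gA x) *\<^sub>R (S *v x) + (2*gB x) *\<^sub>R ((S ** S) *v x)"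

lemma kk_pos: "kk > 0" using lam_pos L_ge by (simp add: kk_def)

lemma TT_pos: "TT > 0"
proof -
  have "S$i$i > 0" for i
  proof -
    have "axis i 1 \<noteq> (0::real^'n)" by (simp add: axis_eq_0_iff)
    from posdef[OF this] show ?thesis
      by (simp add: matrix_vector_mul_component inner_axis inner_axis' cart_eq_inner_axis[symmetric])
  qed
  then show ?thesis unfolding TT_def trace_def by (intro sum_pos) auto
qed

lemma R_eq: "R_lin lam L S = (\<lambda>x. Phi (ra x) (rb x))"
  using L_ge by (auto simp: fun_eq_iff R_lin_def Phi_def ra_def rb_def kk_def TT_def Let_def field_simps power2_eq_square)

lemma symSS: "((S ** S) *v x) \<bullet> y = x \<bullet> ((S ** S) *v y)"
  by (simp add: SS_eq symS)

lemma deriv_quad: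
  fixes M :: "real^'n^'n"
  assumes "\<And>x y. (M *v x) \<bullet> y = x \<bullet> (M *v y)"
  shows "((\<lambda>x. x \<bullet> (M *v x)) has_derivative (\<lambda>h. h \<bullet> (2 *\<^sub>R (M *v x)))) (at x)"
proof -
  have "((\<lambda>x. x \<bullet> (M *v x)) has_derivative (\<lambda>h. h \<bullet> (M *v x) + x \<bullet> (M *v h))) (at x)"
    by (auto intro!: derivative_eq_intros bounded_linear_imp_has_derivative)
  moreover have "(\<lambda>h. h \<bullet> (M *v x) + x \<bullet> (M *v h)) = (\<lambda>h. h \<bullet> (2 *\<^sub>R (M *v x)))"
    using assms by (auto simp: fun_eq_iff) (metis assms inner_commute)
  ultimately show ?thesis by simp
qed

lemma GDERIV_R: "GDERIV (R_lin lam L S) x :> grad x"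
proof -
  have da: "(ra has_derivative (\<lambda>h. h \<bullet> (2 *\<^sub>R (S *v x)))) (at x)"
    unfolding ra_def[abs_def] by (rule deriv_quad) (rule symS)
  have db: "(rb has_derivative (\<lambda>h. h \<bullet> (2 *\<^sub>R ((S**S) *v x)))) (at x)"
    unfolding rb_def[abs_def] by (rule deriv_quad) (rule symSS)
  show ?thesis
    unfolding gderiv_def R_eq Phi_def
    apply (rule has_derivative_eq_rhs)
     apply (rule derivative_eq_intros da db refl)+
    apply (auto simp: fun_eq_iff grad_def gA_def gB_def inner_add_right algebra_simps power2_eq_square)
    done
qed

lemma GDERIV_unique: "GDERIV f x :> g \<Longrightarrow> GDERIV f x :> g' \<Longrightarrow> g = g'"
proof -
  assume "GDERIV f x :> g" "GDERIV f x :> g'"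
  then have "(\<lambda>h. h \<bullet> g) = (\<lambda>h. h \<bullet> g')"
    unfolding gderiv_def by (rule has_derivative_unique)
  then have "(g - g') \<bullet> g = (g - g') \<bullet> g'" by meson
  then have "(g - g') \<bullet> (g - g') = 0" by (simp add: inner_diff_right)
  then show "g = g'" by simp
qed

lemma grad_unique: "GDERIV (R_lin lam L S) x :> g \<Longrightarrow> g = grad x"
  using GDERIV_unique GDERIV_R by blast

lemma c_S: "i \<in> {1..CARD('n)} \<Longrightarrow> u i \<bullet> (S *v x) = \<sigma> i * (u i \<bullet> x)"
  using u_S by auto

lemma ra_coord: "ra x = (\<Sum>i\<in>{1..CARD('n)}. \<sigma> i * (u i \<bullet> x)\<^sup>2)"
  unfolding ra_def parseval[of x "S *v x"]
  by (rule sum.cong) (auto simp: u_S power2_eq_square)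

lemma rb_coord: "rb x = (\<Sum>i\<in>{1..CARD('n)}. (\<sigma> i)\<^sup>2 * (u i \<bullet> x)\<^sup>2)"
  unfolding rb_def parseval[of x "(S**S) *v x"]
  by (rule sum.cong) (auto simp: u_SS power2_eq_square)

lemma grad_coord: "i \<in> {1..CARD('n)} \<Longrightarrow> u i \<bullet> grad x = 2 * (gA x * \<sigma> i + gB x * (\<sigma> i)\<^sup>2) * (u i \<bullet> x)"
  by (simp add: grad_def inner_add_right u_S u_SS algebra_simps)

lemma ra_nonneg: "ra x \<ge> 0"
  unfolding ra_coord
proof (intro sum_nonneg)
  fix i assume "i \<in> {1..CARD('n)}"
  then show "0 \<le> \<sigma> i * (u i \<bullet> x)\<^sup>2" using sig_pos[of i] by simp
qed

lemma rb_nonneg: "rb x \<ge> 0"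
  unfolding rb_coord by (intro sum_nonneg) auto

lemma ra_lower: "ra x \<ge> \<sigma> (CARD('n)) * (norm x)\<^sup>2"
proof -
  have "\<sigma> (CARD('n)) * (norm x)\<^sup>2 = (\<Sum>i\<in>{1..CARD('n)}. \<sigma> (CARD('n)) * (u i \<bullet> x)\<^sup>2)"
    by (simp add: norm2_coord sum_distrib_left)
  also have "\<dots> \<le> ra x" unfolding ra_coord
  proof (rule sum_mono)
    fix i assume i: "i \<in> {1..CARD('n)}"
    have "\<sigma> (CARD('n)) \<le> \<sigma> i" using simple[of i "CARD('n)"] i by (cases "i = CARD('n)") auto
    then show "\<sigma> (CARD('n)) * (u i \<bullet> x)\<^sup>2 \<le> \<sigma> i * (u i \<bullet> x)\<^sup>2" by (simp add: mult_right_mono)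
  qed
  finally show ?thesis .
qed

lemma rb_le: "\<sigma> 1 * ra x - rb x = (\<Sum>i\<in>{1..CARD('n)}. \<sigma> i * (\<sigma> 1 - \<sigma> i) * (u i \<bullet> x)\<^sup>2)"
  unfolding ra_coord rb_coord sum_distrib_left sum_subtractf[symmetric]
  by (rule sum.cong) (auto simp: algebra_simps power2_eq_square)

lemma rb_le_ra: "rb x \<le> \<sigma> 1 * ra x"
proof -
  have "0 \<le> (\<Sum>i\<in>{1..CARD('n)}. \<sigma> i * (\<sigma> 1 - \<sigma> i) * (u i \<bullet> x)\<^sup>2)"
  proof (intro sum_nonneg)
    fix i assume "i \<in> {1..CARD('n)}"
    then show "0 \<le> \<sigma> i * (\<sigma> 1 - \<sigma> i) * (u i \<bullet> x)\<^sup>2" using sig_pos[of i] sig1_ge[of i] by simp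
  qed
  then show ?thesis using rb_le[of x] by simp
qed

lemma rb_eq_ra: "rb x = \<sigma> 1 * ra x \<Longrightarrow> x = (u 1 \<bullet> x) *\<^sub>R u 1"
proof -
  assume "rb x = \<sigma> 1 * ra x"
  then have "(\<Sum>i\<in>{1..CARD('n)}. \<sigma> i * (\<sigma> 1 - \<sigma> i) * (u i \<bullet> x)\<^sup>2) = 0" using rb_le[of x] by simp
  then have z: "\<forall>i\<in>{1..CARD('n)}. \<sigma> i * (\<sigma> 1 - \<sigma> i) * (u i \<bullet> x)\<^sup>2 = 0"
  proof (subst sum_nonneg_eq_0_iff[symmetric])
    fix i assume "i \<in> {1..CARD('n)}"
    then show "0 \<le> \<sigma> i * (\<sigma> 1 - \<sigma> i) * (u i \<bullet> x)\<^sup>2" using sig_pos[of i] sig1_ge[of i] by simp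
  qed auto
  have "u i \<bullet> x = 0" if "i \<in> {1..CARD('n)}" "i \<noteq> 1" for i
  proof -
    have "\<sigma> i * (\<sigma> 1 - \<sigma> i) * (u i \<bullet> x)\<^sup>2 = 0" using z that by blast
    then show ?thesis using that sig_pos[of i] sig1_max[of i] by simp
  qed
  then have "x = (\<Sum>i\<in>{1..CARD('n)}. if i = 1 then (u i \<bullet> x) *\<^sub>R u i else 0)"
    by (subst expand) (rule sum.cong, auto)
  also have "\<dots> = (u 1 \<bullet> x) *\<^sub>R u 1" using one_in_I by simp
  finally show ?thesis .
qed

end


context P16 begin

definition Pv where "Pv s = kk * (TT + (real L + 1) * s)"
definition Qv where "Qv s = kk^2 * (real L + 2) * (TT + (real L + 3) * s)"
definition mval where "mval s = TT - (Pv s)^2 / Qv s"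
definition xs where "xs s = (TT + (real L + 1) * s) / (kk * (real L + 2) * s * (TT + (real L + 3) * s))"

lemma L1: "real L \<ge> 1" using L_ge by simp

lemma Qv_pos: "s \<ge> 0 \<Longrightarrow> Qv s > 0"
  unfolding Qv_def using kk_pos TT_pos L1 by (intro mult_pos_pos) (auto intro: add_pos_nonneg)

lemma Pv_pos: "s \<ge> 0 \<Longrightarrow> Pv s > 0"
  unfolding Pv_def using kk_pos TT_pos L1 by (intro mult_pos_pos) (auto intro: add_pos_nonneg)

lemma xs_pos: "s > 0 \<Longrightarrow> xs s > 0"
  unfolding xs_def using kk_pos TT_pos L1 by (intro divide_pos_pos mult_pos_pos) (auto intro: add_pos_nonneg)

lemma PQ_xs: "s > 0 \<Longrightarrow> Pv s / Qv s = s * xs s"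
proof -
  assume s: "s > 0"
  define N where "N = TT + (real L + 1) * s"
  define D where "D = TT + (real L + 3) * s"
  have D: "D > 0" using TT_pos s L1 unfolding D_def by (intro add_pos_nonneg) auto
  have "Pv s / Qv s = (kk * N) / (kk * (kk * (real L + 2) * D))"
    unfolding Pv_def Qv_def N_def D_def by (simp add: power2_eq_square mult.assoc)
  also have "\<dots> = N / (kk * (real L + 2) * D)" using kk_pos by simp
  also have "\<dots> = (s * N) / (s * (kk * (real L + 2) * D))" using s by simp
  also have "\<dots> = s * xs s" unfolding xs_def N_def D_def by (simp add: mult.assoc mult.left_commute)
  finally show ?thesis .
qed

lemma Phi_lin: "Phi p q = Phi p 0 + (-2*kk*(real L+1) + kk^2*(real L+2)*(real L+3)*p) * q"
  unfolding Phi_def by (simp add: algebra_simps)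

lemma Phi_diag0: "Phi p (s*p) = TT - 2 * Pv s * p + Qv s * p^2"
  unfolding Phi_def Pv_def Qv_def by (simp add: algebra_simps power2_eq_square)

lemma Phi_diag: "s \<ge> 0 \<Longrightarrow> Qv s * (Phi p (s*p) - mval s) = (Qv s * p - Pv s)^2"
proof -
  assume s: "s \<ge> 0"
  have "Qv s * ((Pv s)^2 / Qv s) = (Pv s)^2" using Qv_pos[OF s] by simp
  then show ?thesis unfolding Phi_diag0 mval_def by (simp add: algebra_simps power2_eq_square)
qed

lemma Phi_diag_ge: "s \<ge> 0 \<Longrightarrow> Phi p (s*p) \<ge> mval s"
  using Phi_diag[of s p] Qv_pos[of s]
  by (metis diff_ge_0_iff_ge zero_le_mult_iff zero_le_power2 not_less)

lemma Phi_zero: "(real L + 2) * Phi p 0 = TT * (real L + 1) + TT * (1 - kk * (real L + 2) * p)^2"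
  unfolding Phi_def by (simp add: algebra_simps power2_eq_square)

lemma Phi_zero_ge: "Phi p 0 \<ge> TT * (real L + 1) / (real L + 2)"
proof -
  have "TT * (1 - kk * (real L + 2) * p)^2 \<ge> 0" using TT_pos by simp
  then have "(real L + 2) * Phi p 0 \<ge> TT * (real L + 1)" using Phi_zero[of p] by linarith
  then show ?thesis using L1 by (simp add: pos_divide_le_eq mult.commute)
qed

lemma mval_lt_zero: "s > 0 \<Longrightarrow> mval s < TT * (real L + 1) / (real L + 2)"
proof -
  assume s: "s > 0"
  define N where "N = TT + (real L + 1) * s"
  define D where "D = TT + (real L + 3) * s"
  have key: "TT * D < N^2"
  proof -
    have "N^2 - TT * D = (real L - 1) * TT * s + (real L + 1)^2 * s^2"
      unfolding N_def D_def by (simp add: algebra_simps power2_eq_square)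
    moreover have "(real L - 1) * TT * s \<ge> 0" using L1 TT_pos s by simp
    moreover have "(real L + 1)^2 * s^2 > 0" using s by simp
    ultimately show ?thesis by linarith
  qed
  have e: "(Pv s)^2 * (real L + 2) - TT * Qv s = kk^2 * (real L + 2) * (N^2 - TT * D)"
    unfolding Pv_def Qv_def N_def D_def by algebra
  have "kk^2 * (real L + 2) * (N^2 - TT * D) > 0" using key kk_pos L1 by simp
  then have "TT * Qv s < (Pv s)^2 * (real L + 2)" using e by linarith
  then have "TT * Qv s / (real L + 2) < (Pv s)^2" using L1 by (simp add: pos_divide_less_eq)
  then have "TT / (real L + 2) * Qv s < (Pv s)^2" by simp
  then have "TT / (real L + 2) < (Pv s)^2 / Qv s" using Qv_pos[of s] s by (simp add: pos_less_divide_eq)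
  moreover have "TT * (real L + 1) / (real L + 2) = TT - TT / (real L + 2)"
    using L1 by (simp add: field_simps)
  ultimately show ?thesis unfolding mval_def by linarith
qed

lemma Phi_min:
  assumes s: "s > 0" and p: "p \<ge> 0" and q: "q \<ge> 0" "q \<le> s * p"
  shows "mval s \<le> Phi p q" and "Phi p q = mval s \<Longrightarrow> q = s * p \<and> p = Pv s / Qv s"
proof -
  define \<beta> where "\<beta> = -2*kk*(real L+1) + kk^2*(real L+2)*(real L+3)*p"
  have lin: "Phi p q = Phi p 0 + \<beta> * q" unfolding \<beta>_def Phi_def by (simp add: algebra_simps)
  have lin2: "Phi p q = Phi p (s*p) + \<beta> * (q - s*p)"
    unfolding \<beta>_def Phi_def by (simp add: algebra_simps)
  have z: "Phi p 0 \<ge> TT * (real L + 1) / (real L + 2)" by (rule Phi_zero_ge)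
  have d: "Phi p (s*p) \<ge> mval s" using Phi_diag_ge s by simp
  have "mval s \<le> Phi p q \<and> (Phi p q = mval s \<longrightarrow> q = s * p \<and> p = Pv s / Qv s)"
  proof (cases "\<beta> \<ge> 0")
    case True
    then have "Phi p q \<ge> Phi p 0" using lin q by simp
    then have "Phi p q > mval s" using z mval_lt_zero[OF s] by linarith
    then show ?thesis by simp
  next
    case False
    then have b0: "\<beta> * (q - s*p) \<ge> 0" using q by (simp add: mult_nonpos_nonpos)
    then have ge: "Phi p q \<ge> mval s" using lin2 d by linarith
    moreover have "Phi p q = mval s \<longrightarrow> q = s * p \<and> p = Pv s / Qv s"
    proof
      assume eq: "Phi p q = mval s"
      then have "\<beta> * (q - s*p) = 0" using lin2 d b0 by linarith
      then have qq: "q = s * p" using False by simp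
      then have "(Qv s * p - Pv s)^2 = 0" using eq Phi_diag[of s p] s by simp
      then have "p = Pv s / Qv s" using Qv_pos[of s] s by (simp add: eq_divide_eq mult.commute)
      then show "q = s * p \<and> p = Pv s / Qv s" using qq by simp
    qed
    ultimately show ?thesis by simp
  qed
  then show "mval s \<le> Phi p q" and "Phi p q = mval s \<Longrightarrow> q = s * p \<and> p = Pv s / Qv s" by auto
qed

lemma mval_mono: "0 < s \<Longrightarrow> s < t \<Longrightarrow> mval t < mval s"
proof -
  assume s: "0 < s" "s < t"
  define l where "l = real L"
  have l: "l \<ge> 1" using L1 l_def by simp
  define N1 where "N1 = TT + (l + 1) * s"
  define N2 where "N2 = TT + (l + 1) * t"
  define D1 where "D1 = TT + (l + 3) * s"
  define D2 where "D2 = TT + (l + 3) * t"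
  have fact1: "N1^2 * D2 < N2^2 * D1"
  proof -
    have "N2^2 * D1 - N1^2 * D2 = (t - s) * ((l - 1) * TT^2 + (l+1)^2 * TT * (s + t) + (l+1)^2 * (l+3) * s * t)"
      unfolding N1_def N2_def D1_def D2_def by algebra
    moreover have "(l - 1) * TT^2 + (l+1)^2 * TT * (s + t) + (l+1)^2 * (l+3) * s * t > 0"
      using l s TT_pos by (intro add_nonneg_pos add_pos_pos) (auto intro!: mult_pos_pos)
    moreover have "t - s > 0" using s by simp
    ultimately show ?thesis by (smt (verit) mult_pos_pos)
  qed
  have e: "(Pv s)^2 * Qv t = kk^4 * (l+2) * (N1^2 * D2)" "(Pv t)^2 * Qv s = kk^4 * (l+2) * (N2^2 * D1)"
    unfolding Pv_def Qv_def N1_def N2_def D1_def D2_def l_def by algebra+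
  have "kk^4 * (l+2) > 0" using kk_pos l by simp
  then have "(Pv s)^2 * Qv t < (Pv t)^2 * Qv s" unfolding e using fact1 by (rule mult_strict_left_mono[rotated])
  then have "(Pv s)^2 * Qv t / Qv s < (Pv t)^2" using Qv_pos[of s] s by (simp add: pos_divide_less_eq)
  then have "(Pv s)^2 / Qv s * Qv t < (Pv t)^2" by simp
  then have "(Pv s)^2 / Qv s < (Pv t)^2 / Qv t" using Qv_pos[of t] s by (simp add: pos_less_divide_eq)
  then show ?thesis unfolding mval_def by simp
qed

lemma mval_lt_TT: "s > 0 \<Longrightarrow> mval s < TT"
  unfolding mval_def using Pv_pos[of s] Qv_pos[of s] by simp

lemma alpha_eq: "alpha1_star lam L S s = sqrt (xs s)"
  unfolding alpha1_star_def xs_def kk_def TT_def by simp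

end


definition LB :: "'a::metric_space set \<Rightarrow> ('a \<Rightarrow> 'b::real_normed_vector) \<Rightarrow> bool" where
  "LB K f \<longleftrightarrow> (\<exists>C. C-lipschitz_on K f) \<and> (\<exists>B\<ge>0. \<forall>x\<in>K. norm (f x) \<le> B)"

lemma LBI: "C-lipschitz_on K f \<Longrightarrow> 0 \<le> B \<Longrightarrow> (\<And>x. x \<in> K \<Longrightarrow> norm (f x) \<le> B) \<Longrightarrow> LB K f"
  unfolding LB_def by blast

lemma LBE: assumes "LB K f" obtains C B where "C-lipschitz_on K f" "0 \<le> B" "\<And>x. x \<in> K \<Longrightarrow> norm (f x) \<le> B"
  using assms unfolding LB_def by blast

lemma LB_const: "LB K (\<lambda>x. c)"
  by (rule LBI[OF lipschitz_on_constant, of "norm c"]) auto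

lemma LB_add: "LB K f \<Longrightarrow> LB K g \<Longrightarrow> LB K (\<lambda>x. f x + g x)"
proof -
  assume "LB K f" "LB K g"
  then obtain C1 B1 C2 B2 where 1: "C1-lipschitz_on K f" "0 \<le> B1" "\<And>x. x \<in> K \<Longrightarrow> norm (f x) \<le> B1"
    and 2: "C2-lipschitz_on K g" "0 \<le> B2" "\<And>x. x \<in> K \<Longrightarrow> norm (g x) \<le> B2"
    by (metis LBE)
  show ?thesis
  proof (rule LBI[OF lipschitz_on_add[OF 1(1) 2(1)], of "B1 + B2"])
    show "0 \<le> B1 + B2" using 1 2 by simp
    fix x assume "x \<in> K"
    then show "norm (f x + g x) \<le> B1 + B2" using 1(3)[of x] 2(3)[of x] norm_triangle_ineq[of "f x" "g x"] by linarith
  qed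
qed

lemma LB_minus: "LB K f \<Longrightarrow> LB K (\<lambda>x. - f x)"
  unfolding LB_def by auto

lemma LB_diff: "LB K f \<Longrightarrow> LB K g \<Longrightarrow> LB K (\<lambda>x. f x - g x)"
  using LB_add[of K f "\<lambda>x. - g x"] LB_minus[of K g] by simp

lemma LB_scaleR: "LB K (f :: _ \<Rightarrow> real) \<Longrightarrow> LB K g \<Longrightarrow> LB K (\<lambda>x. f x *\<^sub>R g x)"
proof -
  assume "LB K f" "LB K g"
  then obtain C1 B1 C2 B2 where 1: "C1-lipschitz_on K f" "0 \<le> B1" "\<And>x. x \<in> K \<Longrightarrow> norm (f x) \<le> B1"
    and 2: "C2-lipschitz_on K g" "0 \<le> B2" "\<And>x. x \<in> K \<Longrightarrow> norm (g x) \<le> B2"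
    by (metis LBE)
  show ?thesis
  proof (rule LBI[OF lip_scaleR[OF 1(1) 2(1)], of B1 B2 "B1 * B2"])
    show "0 \<le> B1 * B2" using 1 2 by simp
    fix x assume x: "x \<in> K"
    then show "norm (f x *\<^sub>R g x) \<le> B1 * B2" using 1(3)[of x] 2(3)[of x] 1(2) by (simp add: mult_mono)
  qed (use 1 2 in auto)
qed

lemma LB_mult: "LB K (f :: _ \<Rightarrow> real) \<Longrightarrow> LB K g \<Longrightarrow> LB K (\<lambda>x. f x * g x)"
  using LB_scaleR[of K f g] by simp

lemma LB_inner: "LB K f \<Longrightarrow> LB K g \<Longrightarrow> LB K (\<lambda>x. f x \<bullet> g x)"
proof -
  assume "LB K f" "LB K g"
  then obtain C1 B1 C2 B2 where 1: "C1-lipschitz_on K f" "0 \<le> B1" "\<And>x. x \<in> K \<Longrightarrow> norm (f x) \<le> B1"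
    and 2: "C2-lipschitz_on K g" "0 \<le> B2" "\<And>x. x \<in> K \<Longrightarrow> norm (g x) \<le> B2"
    by (metis LBE)
  show ?thesis
  proof (rule LBI[OF lip_inner[OF 1(1) 2(1)], of B1 B2 "B1 * B2"])
    show "0 \<le> B1 * B2" using 1 2 by simp
    fix x assume x: "x \<in> K"
    have "\<bar>f x \<bullet> g x\<bar> \<le> norm (f x) * norm (g x)" by (rule Cauchy_Schwarz_ineq2)
    also have "\<dots> \<le> B1 * B2" using 1(3)[OF x] 2(3)[OF x] 1(2) by (simp add: mult_mono)
    finally show "norm (f x \<bullet> g x) \<le> B1 * B2" by simp
  qed (use 1 2 in auto)
qed

lemma LB_id: "LB (cball 0 r) (\<lambda>x. x)"
  by (rule LBI[OF lipschitz_on_id, of "max 0 r"]) auto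

lemma LB_linear: "bounded_linear f \<Longrightarrow> LB (cball (0::'a::euclidean_space) r) f"
proof -
  assume f: "bounded_linear f"
  obtain C where "C-lipschitz_on (cball 0 r) f" using bounded_linear.lipschitz_boundE[OF f] by blast
  moreover obtain B where "0 \<le> B" "\<And>x. x \<in> cball 0 r \<Longrightarrow> norm (f x) \<le> B"
    using cont_bounded_cball[of 0 r f] f linear_continuous_on by blast
  ultimately show ?thesis unfolding LB_def by blast
qed

lemma LB_subset: "LB K f \<Longrightarrow> K' \<subseteq> K \<Longrightarrow> LB K' f"
  unfolding LB_def by (meson lipschitz_on_subset subsetD)

context P16 begin

lemma LB_ra: "LB (cball 0 r) ra"
  unfolding ra_def by (rule LB_inner LB_id LB_linear matrix_vector_mul_bounded_linear)+

lemma LB_rb: "LB (cball 0 r) rb"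
  unfolding rb_def by (rule LB_inner LB_id LB_linear matrix_vector_mul_bounded_linear)+

lemma LB_R: "LB (cball 0 r) (R_lin lam L S)"
  unfolding R_eq Phi_def power2_eq_square
  by (rule LB_add LB_diff LB_mult LB_const LB_ra LB_rb)+

lemma LB_grad: "LB (cball 0 r) grad"
  unfolding grad_def gA_def gB_def power2_eq_square
  by (rule LB_add LB_diff LB_scaleR LB_mult LB_const LB_ra LB_rb LB_linear matrix_vector_mul_bounded_linear)+

lemma ball_sub: "ball x e \<subseteq> cball 0 (norm x + e)"
proof
  fix y assume "y \<in> ball x e"
  then have "norm (y - x) < e" by (simp add: dist_norm norm_minus_commute)
  moreover have "norm y \<le> norm x + norm (y - x)" using norm_triangle_sub[of y x] by simp
  ultimately show "y \<in> cball 0 (norm x + e)" by simp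
qed

lemma loc_lip: "locally_lipschitz (R_lin lam L S)"
  unfolding locally_lipschitz_def
proof
  fix x :: "real^'n"
  have "LB (ball x 1) (R_lin lam L S)"
    by (rule LB_subset[OF LB_R ball_sub])
  then show "\<exists>e>0. \<exists>C. C-lipschitz_on (ball x e) (R_lin lam L S)"
    unfolding LB_def by (intro exI[of _ 1]) auto
qed

end


lemma picard_global:
  fixes G :: "'a::euclidean_space \<Rightarrow> 'a"
  assumes lip: "\<And>x y. norm (G x - G y) \<le> C * norm (x - y)"
    and bnd: "\<And>x. norm (G x) \<le> M" and C: "0 \<le> C"
  shows "\<exists>x. x 0 = x0 \<and> (\<forall>t\<ge>0. (x has_vector_derivative G (x t)) (at t within {0..}))"
proof -
  have M: "0 \<le> M" using bnd[of 0] norm_ge_zero order_trans by blast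
  have contG: "continuous_on A G" for A
  proof -
    have "C-lipschitz_on A G" by (rule lipschitz_onI) (auto simp: dist_norm lip C)
    then show ?thesis by (rule lipschitz_on_continuous_on)
  qed
  define X where "X = rec_nat (\<lambda>t::real. x0) (\<lambda>m Xm (t::real). x0 + integral {0..t} (\<lambda>s. G (Xm s)))"
  have X0: "X 0 = (\<lambda>t. x0)" and XS: "\<And>m. X (Suc m) = (\<lambda>t. x0 + integral {0..t} (\<lambda>s. G (X m s)))"
    by (simp_all add: X_def)
  have contX: "continuous_on {0..b} (X m)" for m b
  proof (induction m)
    case 0 then show ?case by (simp add: X0)
  next
    case (Suc m)
    have cG: "continuous_on {0..b} (\<lambda>s. G (X m s))"
      using continuous_on_compose2[OF contG Suc] by auto
    have "continuous_on {0..b} (\<lambda>t. integral {0..t} (\<lambda>s. G (X m s)))"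
      unfolding continuous_on_eq_continuous_within
      using integral_has_vector_derivative[OF cG] has_vector_derivative_continuous by blast
    then show ?case unfolding XS by (intro continuous_intros)
  qed
  have contGX: "continuous_on {0..b} (\<lambda>s. G (X m s))" for m b
    using continuous_on_compose2[OF contG contX] by auto
  have intGX: "(\<lambda>s. G (X m s)) integrable_on {0..b}" for m b
    by (rule integrable_continuous_real[OF contGX])
  define bd where "bd m t = M * C^m * t^(Suc m) / fact (Suc m)" for m t
  have bd_int: "((\<lambda>s. C * bd m s) has_integral bd (Suc m) t) {0..t}" if t: "0 \<le> t" for m t
  proof -
    have "((\<lambda>s. C * bd m s) has_integral (bd (Suc m) t - bd (Suc m) 0)) {0..t}"
    proof (rule fundamental_theorem_of_calculus[OF t])
      fix s :: real
      have "((\<lambda>s. bd (Suc m) s) has_real_derivative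
          M * C^(Suc m) * (real (Suc (Suc m)) * s^(Suc m)) / fact (Suc (Suc m))) (at s)"
        unfolding bd_def by (intro derivative_eq_intros) auto
      moreover have "M * C^(Suc m) * (real (Suc (Suc m)) * s^(Suc m)) / fact (Suc (Suc m)) = C * bd m s"
      proof -
        have f: "(fact (Suc (Suc m)) :: real) = real (Suc (Suc m)) * fact (Suc m)" by (simp only: fact_Suc of_nat_mult)
        have nz: "real (Suc (Suc m)) \<noteq> 0" by simp
        have "M * C^(Suc m) * (real (Suc (Suc m)) * s^(Suc m)) / fact (Suc (Suc m)) = (real (Suc (Suc m)) * (M * C^(Suc m) * s^(Suc m))) / (real (Suc (Suc m)) * fact (Suc m))"
          unfolding f by (simp add: ac_simps)
        also have "\<dots> = M * C^(Suc m) * s^(Suc m) / fact (Suc m)" using nz by (rule mult_divide_mult_cancel_left)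
        also have "\<dots> = C * (M * C^m * s^(Suc m) / fact (Suc m))" by (simp add: ac_simps)
        finally show ?thesis unfolding bd_def .
      qed
      ultimately show "((\<lambda>s. bd (Suc m) s) has_vector_derivative C * bd m s) (at s within {0..t})"
        by (simp add: has_real_derivative_iff_has_vector_derivative[symmetric] has_field_derivative_at_within)
    qed
    then show ?thesis by (simp add: bd_def)
  qed
  have dif: "norm (X (Suc m) t - X m t) \<le> bd m t" if "0 \<le> t" for m t
    using that
  proof (induction m arbitrary: t)
    case 0
    have "X (Suc 0) t - X 0 t = t *\<^sub>R G x0" using 0 by (simp add: XS X0)
    moreover have "t * norm (G x0) \<le> M * t" using 0 bnd[of x0] by (metis mult.commute mult_left_mono)
    ultimately show ?case using 0 by (simp add: bd_def)
  next
    case (Suc m)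
    have "X (Suc (Suc m)) t - X (Suc m) t = integral {0..t} (\<lambda>s. G (X (Suc m) s)) - integral {0..t} (\<lambda>s. G (X m s))"
      by (simp add: XS)
    also have "\<dots> = integral {0..t} (\<lambda>s. G (X (Suc m) s) - G (X m s))"
      by (rule integral_diff[OF intGX intGX, symmetric])
    finally have eq: "X (Suc (Suc m)) t - X (Suc m) t = integral {0..t} (\<lambda>s. G (X (Suc m) s) - G (X m s))" .
    have "norm (integral {0..t} (\<lambda>s. G (X (Suc m) s) - G (X m s))) \<le> integral {0..t} (\<lambda>s. C * bd m s)"
    proof (rule integral_norm_bound_integral)
      show "(\<lambda>s. G (X (Suc m) s) - G (X m s)) integrable_on {0..t}" by (intro integrable_diff intGX)
      show "(\<lambda>s. C * bd m s) integrable_on {0..t}" using bd_int[OF Suc.prems] by blast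
      fix s assume s: "s \<in> {0..t}"
      have "norm (G (X (Suc m) s) - G (X m s)) \<le> C * norm (X (Suc m) s - X m s)" by (rule lip)
      also have "\<dots> \<le> C * bd m s" using Suc.IH[of s] s C by (auto intro: mult_left_mono)
      finally show "norm (G (X (Suc m) s) - G (X m s)) \<le> C * bd m s" .
    qed
    also have "\<dots> = bd (Suc m) t" using bd_int[OF Suc.prems] by (rule integral_unique)
    finally show ?case using eq by simp
  qed
  define d where "d i t = X (Suc i) t - X i t" for i t
  have tele: "X n t = x0 + (\<Sum>i<n. d i t)" for n t
    unfolding d_def using sum_lessThan_telescope[of "\<lambda>i. X i t" n] by (simp add: X0)
  have W: "uniform_limit {0..b} (\<lambda>n t. \<Sum>i<n. d i t) (\<lambda>t. \<Sum>i. d i t) sequentially" if b: "0 \<le> b" for b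
  proof (rule Weierstrass_m_test)
    fix n t assume t: "t \<in> {0..b}"
    have "norm (d n t) \<le> bd n t" unfolding d_def using dif[of t n] t by simp
    also have "\<dots> \<le> bd n b" unfolding bd_def using t M C
      by (intro divide_right_mono mult_left_mono power_mono) auto
    finally show "norm (d n t) \<le> bd n b" .
  next
    have "summable (\<lambda>n. (M * b) * (inverse (fact n) * (C * b)^n))"
      by (intro summable_mult summable_exp)
    then show "summable (\<lambda>n. bd n b)"
    proof (rule summable_comparison_test')
      fix n :: nat
      have "fact n \<le> (fact (Suc n) :: real)" by (rule fact_mono) simp
      then have "M * b * (C * b)^n / fact (Suc n) \<le> M * b * (C * b)^n / fact n"
        using M b C by (intro divide_left_mono) auto
      then show "norm (bd n b) \<le> (M * b) * (inverse (fact n) * (C * b)^n)"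
        unfolding bd_def using M b C by (simp add: power_mult_distrib field_simps)
    qed
  qed
  define x where "x t = x0 + (\<Sum>i. d i t)" for t
  have UL: "uniform_limit {0..b} X x sequentially" if b: "0 \<le> b" for b
    unfolding uniform_limit_iff
  proof (intro allI impI)
    fix e :: real assume e: "e > 0"
    have "\<forall>\<^sub>F n in sequentially. \<forall>t\<in>{0..b}. dist (\<Sum>i<n. d i t) (\<Sum>i. d i t) < e"
      using W[OF b] e unfolding uniform_limit_iff by blast
    then show "\<forall>\<^sub>F n in sequentially. \<forall>t\<in>{0..b}. dist (X n t) (x t) < e"
      by (rule eventually_mono) (simp add: tele x_def dist_add_cancel)
  qed
  have contx: "continuous_on {0..b} x" if "0 \<le> b" for b
    by (rule uniform_limit_theorem[OF _ UL[OF that]]) (auto simp: contX)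
  have contGx: "continuous_on {0..b} (\<lambda>s. G (x s))" if "0 \<le> b" for b
    using continuous_on_compose2[OF contG contx[OF that]] by auto
  have ULG: "uniform_limit {0..b} (\<lambda>n s. G (X n s)) (\<lambda>s. G (x s)) sequentially" if b: "0 \<le> b" for b
    unfolding uniform_limit_iff
  proof (intro allI impI)
    fix e :: real assume e: "e > 0"
    have "\<forall>\<^sub>F n in sequentially. \<forall>t\<in>{0..b}. dist (X n t) (x t) < e / (C + 1)"
      using UL[OF b] e C unfolding uniform_limit_iff by (auto simp: add_nonneg_pos)
    then show "\<forall>\<^sub>F n in sequentially. \<forall>t\<in>{0..b}. dist (G (X n t)) (G (x t)) < e"
    proof (rule eventually_mono, intro ballI)
      fix n t assume H: "\<forall>t\<in>{0..b}. dist (X n t) (x t) < e / (C + 1)" and t: "t \<in> {0..b}"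
      have "dist (G (X n t)) (G (x t)) \<le> C * dist (X n t) (x t)" using lip by (simp add: dist_norm)
      also have "\<dots> \<le> C * (e / (C + 1))"
        using H t C by (intro mult_left_mono) (auto intro: less_imp_le)
      also have "\<dots> < e" using C e by (simp add: field_simps)
      finally show "dist (G (X n t)) (G (x t)) < e" .
    qed
  qed
  have inteq: "x t = x0 + integral {0..t} (\<lambda>s. G (x s))" if t: "0 \<le> t" for t
  proof -
    obtain I J where I: "\<And>n. ((\<lambda>s. G (X n s)) has_integral I n) {0..t}"
      and J: "((\<lambda>s. G (x s)) has_integral J) {0..t}" and IJ: "I \<longlonglongrightarrow> J"
      using uniform_limit_integral[OF ULG[OF t]] contGX by auto
    have "X (Suc n) t = x0 + I n" for n using I[of n] by (simp add: XS integral_unique)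
    moreover have "(\<lambda>n. X (Suc n) t) \<longlonglongrightarrow> x t"
      using tendsto_uniform_limitI[OF UL[OF t], of t] t LIMSEQ_Suc by auto
    ultimately have "(\<lambda>n. x0 + I n) \<longlonglongrightarrow> x t" by simp
    moreover have "(\<lambda>n. x0 + I n) \<longlonglongrightarrow> x0 + J" by (intro tendsto_intros IJ)
    ultimately have "x t = x0 + J" by (rule LIMSEQ_unique)
    then show ?thesis using J by (simp add: integral_unique)
  qed
  show ?thesis
  proof (intro exI conjI allI impI)
    show "x 0 = x0" using inteq[of 0] by simp
    fix t :: real assume t: "0 \<le> t"
    have "((\<lambda>u. x0 + integral {0..u} (\<lambda>s. G (x s))) has_vector_derivative 0 + G (x t)) (at t within {0..t+1})"
      by (intro has_vector_derivative_add has_vector_derivative_const integral_has_vector_derivative contGx) (use t in auto)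
    then have "((\<lambda>u. x0 + integral {0..u} (\<lambda>s. G (x s))) has_vector_derivative G (x t)) (at t within {0..t+1})"
      by simp
    then have "(x has_vector_derivative G (x t)) (at t within {0..t+1})"
      by (rule has_vector_derivative_transform_within[where d=1]) (use t inteq in auto)
    moreover have "at t within {0..t+1} = at t within {0..}"
      by (rule at_within_nhd[where S="{..<t+1}"]) auto
    ultimately show "(x has_vector_derivative G (x t)) (at t within {0..})" by simp
  qed
qed


context P16 begin

lemma sigN_pos: "\<sigma> (CARD('n)) > 0" using last_pos .

lemma R_lower: "R_lin lam L S x \<ge> TT - (2*kk*TT + 2*kk*(real L+1)*\<sigma> 1) * ra x + kk^2*(real L+2)*TT * (ra x)^2"
proof -
  have p: "ra x \<ge> 0" and q: "rb x \<ge> 0" "rb x \<le> \<sigma> 1 * ra x" using ra_nonneg rb_nonneg rb_le_ra by auto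
  have "2*kk*(real L+1) * rb x \<le> 2*kk*(real L+1) * (\<sigma> 1 * ra x)"
    using q kk_pos by (intro mult_left_mono) auto
  moreover have "kk^2*(real L+2)*(real L+3) * ra x * rb x \<ge> 0" using p q kk_pos by simp
  ultimately show ?thesis unfolding R_eq Phi_def by (simp add: algebra_simps)
qed

lemma coercive_bound: "\<exists>\<rho>. \<forall>x. norm x \<ge> \<rho> \<longrightarrow> R_lin lam L S x \<ge> Z"
proof -
  define cA where "cA = 2*kk*TT + 2*kk*(real L+1)*\<sigma> 1"
  define cB where "cB = kk^2*(real L+2)*TT"
  have cA: "cA \<ge> 0" unfolding cA_def using kk_pos TT_pos sig_pos[OF one_in_I] by simp
  have cB: "cB > 0" unfolding cB_def using kk_pos TT_pos by simp
  define p0 where "p0 = 1 + (cA + \<bar>Z - TT\<bar>) / cB"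
  have p0: "p0 \<ge> 1" unfolding p0_def using cA cB by simp
  have key: "TT - cA * p + cB * p^2 \<ge> Z" if p: "p \<ge> p0" for p
  proof -
    have "cB * p^2 \<ge> cB * p0 * p" using p p0 cB by (simp add: power2_eq_square mult_left_mono mult_right_mono)
    moreover have "cB * p0 = cB + cA + \<bar>Z - TT\<bar>" unfolding p0_def using cB by (simp add: field_simps)
    moreover have "(cB + cA + \<bar>Z - TT\<bar>) * p \<ge> cA * p + \<bar>Z - TT\<bar>"
    proof -
      have "\<bar>Z - TT\<bar> * p \<ge> \<bar>Z - TT\<bar> * 1" using p p0 by (intro mult_left_mono) auto
      moreover have "cB * p \<ge> 0" using cB p p0 by simp
      ultimately show ?thesis by (simp add: distrib_right)
    qed
    ultimately have "cB * p^2 \<ge> cA * p + \<bar>Z - TT\<bar>" by (metis order_trans)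
    moreover have "\<bar>Z - TT\<bar> \<ge> Z - TT" by simp
    ultimately show ?thesis by linarith
  qed
  define \<rho> where "\<rho> = sqrt (p0 / \<sigma> (CARD('n)))"
  show ?thesis
  proof (intro exI allI impI)
    fix x :: "real^'n" assume x: "norm x \<ge> \<rho>"
    have "\<rho> \<ge> 0" unfolding \<rho>_def using p0 sigN_pos by simp
    then have "(norm x)^2 \<ge> \<rho>^2" using x by (simp add: power_mono)
    also have "\<rho>^2 = p0 / \<sigma> (CARD('n))" unfolding \<rho>_def using p0 sigN_pos by simp
    finally have "\<sigma> (CARD('n)) * (norm x)^2 \<ge> p0" using sigN_pos by (simp add: field_simps)
    then have "ra x \<ge> p0" using ra_lower[of x] by linarith
    then have "TT - cA * ra x + cB * (ra x)^2 \<ge> Z" by (rule key)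
    then show "R_lin lam L S x \<ge> Z" using R_lower[of x] unfolding cA_def cB_def by linarith
  qed
qed

lemma coercive: "filterlim (R_lin lam L S) at_top at_infinity"
  unfolding filterlim_at_top eventually_at_infinity using coercive_bound by blast

lemma sublevel: "\<exists>\<rho>>0. \<forall>x. R_lin lam L S x \<le> Z \<longrightarrow> norm x < \<rho>"
proof -
  obtain \<rho> where \<rho>: "\<forall>x. norm x \<ge> \<rho> \<longrightarrow> R_lin lam L S x \<ge> Z + 1" using coercive_bound by blast
  show ?thesis
  proof (intro exI[of _ "max 1 \<rho>"] conjI allI impI)
    fix x assume "R_lin lam L S x \<le> Z"
    then show "norm x < max 1 \<rho>" using \<rho>[rule_format, of x] by force
  qed simp
qed

lemma R_chain:
  assumes "(y has_vector_derivative v) (at t within A)"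
  shows "((\<lambda>t. R_lin lam L S (y t)) has_real_derivative (v \<bullet> grad (y t))) (at t within A)"
proof -
  have "((R_lin lam L S) has_derivative (\<lambda>h. h \<bullet> grad (y t))) (at (y t) within y ` A)"
    using GDERIV_R[of "y t"] unfolding gderiv_def by (rule has_derivative_at_withinI)
  from vector_derivative_diff_chain_within[OF assms this]
  show ?thesis by (simp add: has_real_derivative_iff_has_vector_derivative o_def)
qed

lemma flow_exists: "\<exists>mu. grad_flow (R_lin lam L S) mu mu0"
proof -
  obtain \<rho> where \<rho>: "\<rho> > 0" "\<And>x. R_lin lam L S x \<le> R_lin lam L S mu0 \<Longrightarrow> norm x < \<rho>"
    using sublevel by blast
  define r2 where "r2 = \<rho> + 1"
  obtain Cg Mg where Cg: "Cg-lipschitz_on (cball 0 r2) grad" and Mg: "0 \<le> Mg" "\<And>x. x \<in> cball 0 r2 \<Longrightarrow> norm (grad x) \<le> Mg"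
    using LB_grad[of r2] by (metis LBE)
  have Cg0: "0 \<le> Cg" using Cg lipschitz_on_nonneg by blast
  define \<phi> where "\<phi> x = max 0 (min 1 (r2 - norm x))" for x :: "real^'n"
  define G where "G x = - (\<phi> x *\<^sub>R grad x)" for x
  have phi01: "0 \<le> \<phi> x" "\<phi> x \<le> 1" for x unfolding \<phi>_def by auto
  have phi_lip: "\<bar>\<phi> x - \<phi> y\<bar> \<le> norm (x - y)" for x y
  proof -
    have "\<bar>norm x - norm y\<bar> \<le> norm (x - y)" by (rule norm_triangle_ineq3)
    then show ?thesis unfolding \<phi>_def by (simp add: abs_le_iff max_def min_def)
  qed
  have phi_out: "norm x > r2 \<Longrightarrow> \<phi> x = 0" for x unfolding \<phi>_def by auto
  have Gbnd: "norm (G x) \<le> Mg" for x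
  proof (cases "norm x \<le> r2")
    case True
    have "norm (G x) = \<phi> x * norm (grad x)" unfolding G_def using phi01 by simp
    also have "\<dots> \<le> 1 * Mg" using phi01 Mg True by (intro mult_mono) auto
    finally show ?thesis by simp
  next
    case False then show ?thesis unfolding G_def using phi_out Mg by simp
  qed
  have Glip1: "norm (G x - G y) \<le> (Cg + Mg) * norm (x - y)" if xr: "norm x \<le> r2" for x y
  proof (cases "norm y \<le> r2")
    case True
    have "G y - G x = (\<phi> x - \<phi> y) *\<^sub>R grad x + \<phi> y *\<^sub>R (grad x - grad y)"
      unfolding G_def by (simp add: algebra_simps)
    then have "norm (G x - G y) \<le> \<bar>\<phi> x - \<phi> y\<bar> * norm (grad x) + \<phi> y * norm (grad x - grad y)"
      using phi01[of y] by (metis norm_minus_commute norm_scaleR norm_triangle_ineq abs_of_nonneg)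
    also have "\<dots> \<le> norm (x - y) * Mg + 1 * (Cg * norm (x - y))"
      using phi_lip[of x y] Mg(2)[of x] xr phi01[of y] lipschitz_on_normD[OF Cg, of x y] True
      by (intro add_mono mult_mono) auto
    finally show ?thesis by (simp add: algebra_simps)
  next
    case False
    then have "G y = 0" unfolding G_def using phi_out by simp
    then have "norm (G x - G y) = norm (G x)" by simp
    also have "\<dots> = \<phi> x * norm (grad x)" unfolding G_def using phi01[of x] by simp
    finally have "norm (G x - G y) = \<phi> x * norm (grad x)" .
    also have "\<dots> \<le> \<bar>\<phi> x - \<phi> y\<bar> * Mg" using phi_out[of y] False phi01 Mg xr by (intro mult_mono) auto
    also have "\<dots> \<le> norm (x - y) * Mg" using phi_lip Mg by (intro mult_right_mono) auto
    also have "\<dots> \<le> (Cg + Mg) * norm (x - y)" using Cg0 by (simp add: algebra_simps)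
    finally show ?thesis .
  qed
  have Glip: "norm (G x - G y) \<le> (Cg + Mg) * norm (x - y)" for x y
  proof (cases "norm x \<le> r2")
    case True then show ?thesis by (rule Glip1)
  next
    case False
    show ?thesis
    proof (cases "norm y \<le> r2")
      case True then show ?thesis using Glip1[of y x] by (simp add: norm_minus_commute)
    next
      case False': False
      then show ?thesis using False phi_out Cg0 Mg unfolding G_def by simp
    qed
  qed
  obtain x where x0: "x 0 = mu0" and xd: "\<And>t. t \<ge> 0 \<Longrightarrow> (x has_vector_derivative G (x t)) (at t within {0..})"
    using picard_global[OF Glip Gbnd, of mu0] Cg0 Mg by auto
  have dec: "R_lin lam L S (x t) \<le> R_lin lam L S mu0" if t: "t \<ge> 0" for t
  proof -
    have "R_lin lam L S (x t) \<le> R_lin lam L S (x 0)"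
    proof (rule deriv_nonpos_mono[OF order_refl t])
      fix s :: real assume s: "0 \<le> s" "s \<le> t"
      show "((\<lambda>t. R_lin lam L S (x t)) has_real_derivative G (x s) \<bullet> grad (x s)) (at s within {0..})"
        by (rule R_chain[OF xd[OF s(1)]])
      show "G (x s) \<bullet> grad (x s) \<le> 0" unfolding G_def using phi01 by simp
    qed
    then show ?thesis using x0 by simp
  qed
  have Geq: "G (x t) = - grad (x t)" if t: "t \<ge> 0" for t
  proof -
    have "norm (x t) < \<rho>" using \<rho>(2) dec[OF t] by blast
    then have "\<phi> (x t) = 1" unfolding \<phi>_def r2_def by simp
    then show ?thesis unfolding G_def by simp
  qed
  show ?thesis
    unfolding grad_flow_def
    using xd Geq GDERIV_R by (intro exI[of _ x] conjI x0 allI impI) auto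
qed

end


context P16 begin

lemma ra_axis: "j \<in> {1..CARD('n)} \<Longrightarrow> ra (c *\<^sub>R u j) = \<sigma> j * c\<^sup>2"
  unfolding ra_def using eigvec[of j] u_unit[of j]
  by (simp add: matrix_vector_mult_scaleR power2_eq_square)

lemma rb_axis: "j \<in> {1..CARD('n)} \<Longrightarrow> rb (c *\<^sub>R u j) = (\<sigma> j)\<^sup>2 * c\<^sup>2"
  unfolding rb_def SS_eq using eigvec[of j] u_unit[of j]
  by (simp add: matrix_vector_mult_scaleR power2_eq_square)

lemma xs_eq: "s > 0 \<Longrightarrow> (kk * (real L + 2) * s * xs s) * (TT + (real L + 3) * s) = TT + (real L + 1) * s"
proof -
  assume s: "s > 0"
  have "kk * (real L + 2) * s * (TT + (real L + 3) * s) > 0"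
    using s kk_pos TT_pos L1 by (intro mult_pos_pos add_pos_nonneg) auto
  then show ?thesis unfolding xs_def by (simp add: field_simps)
qed

lemma xs_unique: "s > 0 \<Longrightarrow> (kk * (real L + 2) * s * y) * (TT + (real L + 3) * s) = TT + (real L + 1) * s \<Longrightarrow> y = xs s"
proof -
  assume s: "s > 0" and e: "(kk * (real L + 2) * s * y) * (TT + (real L + 3) * s) = TT + (real L + 1) * s"
  have "kk * (real L + 2) * s * (TT + (real L + 3) * s) > 0"
    using s kk_pos TT_pos L1 by (intro mult_pos_pos add_pos_nonneg) auto
  then show ?thesis using e unfolding xs_def by (simp add: field_simps)
qed

lemma w_lt1: "s > 0 \<Longrightarrow> kk * (real L + 2) * s * xs s < 1"
proof -
  assume s: "s > 0"
  define w where "w = kk * (real L + 2) * s * xs s"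
  have e: "w * (TT + (real L + 3) * s) = TT + (real L + 1) * s" using xs_eq[OF s] w_def by simp
  show ?thesis
  proof (rule ccontr)
    assume "\<not> kk * (real L + 2) * s * xs s < 1"
    then have "w \<ge> 1" unfolding w_def by simp
    then have "w * (TT + (real L + 3) * s) \<ge> 1 * (TT + (real L + 3) * s)"
      using s TT_pos by (intro mult_right_mono) auto
    then show False using e s by simp
  qed
qed

lemma axis_crit_sum: "j \<in> {1..CARD('n)} \<Longrightarrow>
  gA (c *\<^sub>R u j) + \<sigma> j * gB (c *\<^sub>R u j) = 2 * kk * ((kk * (real L + 2) * \<sigma> j * c\<^sup>2) * (TT + (real L + 3) * \<sigma> j) - (TT + (real L + 1) * \<sigma> j))"
  unfolding gA_def gB_def by (simp add: ra_axis rb_axis) (simp add: algebra_simps power2_eq_square)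

lemma gB_axis: "j \<in> {1..CARD('n)} \<Longrightarrow> gB (c *\<^sub>R u j) = kk * (- 2 * (real L + 1) + (real L + 3) * (kk * (real L + 2) * \<sigma> j * c\<^sup>2))"
  unfolding gB_def by (simp add: ra_axis) (simp add: algebra_simps power2_eq_square)

lemma gB_axis_neg: "j \<in> {1..CARD('n)} \<Longrightarrow> c\<^sup>2 = xs (\<sigma> j) \<Longrightarrow> gB (c *\<^sub>R u j) < 0"
proof -
  assume j: "j \<in> {1..CARD('n)}" and c: "c\<^sup>2 = xs (\<sigma> j)"
  define w where "w = kk * (real L + 2) * \<sigma> j * c\<^sup>2"
  have "w < 1" using w_lt1[OF sig_pos[OF j]] c w_def by simp
  then have "(real L + 3) * w < (real L + 3) * 1"
    using L1 by (intro mult_strict_left_mono) auto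
  then have "(real L + 3) * w < real L + 3" by simp
  then have "- 2 * (real L + 1) + (real L + 3) * w < 0" using L1 by (smt (verit))
  then have "- 2 * (real L + 1) + (real L + 3) * (kk * (real L + 2) * \<sigma> j * c\<^sup>2) < 0" using w_def by simp
  then show ?thesis using gB_axis[OF j, of c] kk_pos by (simp add: mult_pos_neg)
qed

lemma R_axis: "j \<in> {1..CARD('n)} \<Longrightarrow> c\<^sup>2 = xs (\<sigma> j) \<Longrightarrow> R_lin lam L S (c *\<^sub>R u j) = mval (\<sigma> j)"
proof -
  assume j: "j \<in> {1..CARD('n)}" and c: "c\<^sup>2 = xs (\<sigma> j)"
  have s: "\<sigma> j > 0" using sig_pos[OF j] .
  have "R_lin lam L S (c *\<^sub>R u j) = Phi (\<sigma> j * c\<^sup>2) (\<sigma> j * (\<sigma> j * c\<^sup>2))"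
    unfolding R_eq by (simp add: ra_axis[OF j] rb_axis[OF j] power2_eq_square mult.assoc)
  moreover have "Qv (\<sigma> j) * (\<sigma> j * c\<^sup>2) - Pv (\<sigma> j) = 0"
    using PQ_xs[OF s] Qv_pos[of "\<sigma> j"] s c by (simp add: field_simps)
  ultimately show ?thesis using Phi_diag[of "\<sigma> j" "\<sigma> j * c\<^sup>2"] Qv_pos[of "\<sigma> j"] s by simp
qed

lemma R_zero: "R_lin lam L S 0 = TT"
  unfolding R_eq Phi_def ra_def rb_def by simp

lemma R_ge_min: "R_lin lam L S x \<ge> mval (\<sigma> 1)"
  unfolding R_eq using Phi_min(1)[OF sig_pos[OF one_in_I] ra_nonneg rb_nonneg rb_le_ra] .

abbreviation "alpha \<equiv> alpha1_star lam L S (\<sigma> 1)"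

lemma alpha_sq: "alpha\<^sup>2 = xs (\<sigma> 1)" and alpha_pos: "alpha > 0"
  using alpha_eq xs_pos[OF sig_pos[OF one_in_I]] by auto

lemma minimizers: "{mu. \<forall>nu. R_lin lam L S mu \<le> R_lin lam L S nu} = {alpha *\<^sub>R u 1, - (alpha *\<^sub>R u 1)}"
proof -
  have s1: "\<sigma> 1 > 0" using sig_pos[OF one_in_I] .
  have v1: "R_lin lam L S (alpha *\<^sub>R u 1) = mval (\<sigma> 1)" using R_axis[OF one_in_I alpha_sq] .
  have v2: "R_lin lam L S (- (alpha *\<^sub>R u 1)) = mval (\<sigma> 1)"
    using R_axis[OF one_in_I, of "- alpha"] alpha_sq by simp
  show ?thesis
  proof
    show "{alpha *\<^sub>R u 1, - (alpha *\<^sub>R u 1)} \<subseteq> {mu. \<forall>nu. R_lin lam L S mu \<le> R_lin lam L S nu}"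
      using v1 v2 R_ge_min by auto
  next
    show "{mu. \<forall>nu. R_lin lam L S mu \<le> R_lin lam L S nu} \<subseteq> {alpha *\<^sub>R u 1, - (alpha *\<^sub>R u 1)}"
    proof
      fix mu assume "mu \<in> {mu. \<forall>nu. R_lin lam L S mu \<le> R_lin lam L S nu}"
      then have "R_lin lam L S mu \<le> R_lin lam L S (alpha *\<^sub>R u 1)" by simp
      then have "R_lin lam L S mu \<le> mval (\<sigma> 1)" using v1 by simp
      then have "Phi (ra mu) (rb mu) = mval (\<sigma> 1)" using R_ge_min[of mu] unfolding R_eq by simp
      from Phi_min(2)[OF s1 ra_nonneg rb_nonneg rb_le_ra this]
      have e1: "rb mu = \<sigma> 1 * ra mu" and e2: "ra mu = Pv (\<sigma> 1) / Qv (\<sigma> 1)" by auto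
      define c where "c = u 1 \<bullet> mu"
      have mu: "mu = c *\<^sub>R u 1" using rb_eq_ra[OF e1] c_def by simp
      have "ra mu = \<sigma> 1 * c\<^sup>2" using ra_axis[OF one_in_I, of c] mu by simp
      then have "\<sigma> 1 * c\<^sup>2 = \<sigma> 1 * xs (\<sigma> 1)" using e2 PQ_xs[OF s1] by simp
      then have "c\<^sup>2 = xs (\<sigma> 1)" using s1 by simp
      then have "c\<^sup>2 = alpha\<^sup>2" using alpha_sq by simp
      then have "c = alpha \<or> c = - alpha" by (simp add: power2_eq_iff)
      then show "mu \<in> {alpha *\<^sub>R u 1, - (alpha *\<^sub>R u 1)}" using mu by auto
    qed
  qed
qed

lemma last_part:
  "\<forall>ms \<in> {alpha *\<^sub>R u 1, - (alpha *\<^sub>R u 1)}.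
          (ms /\<^sub>R norm ms = u 1 \<or> ms /\<^sub>R norm ms = - u 1)
          \<and> \<sigma> 1 = - ((- 2 * trace S
                        + 2 * (lam / real L) * (real L + 2) * trace S * (ms \<bullet> (S *v ms))
                        + (lam / real L) * (real L + 2) * (real L + 3) * (ms \<bullet> ((S ** S) *v ms)))
                      / (- 2 * (real L + 1)
                        + (lam / real L) * (real L + 2) * (real L + 3) * (ms \<bullet> (S *v ms))))"
proof
  fix ms assume ms: "ms \<in> {alpha *\<^sub>R u 1, - (alpha *\<^sub>R u 1)}"
  then have "ms = alpha *\<^sub>R u 1 \<or> ms = (- alpha) *\<^sub>R u 1" by auto
  then obtain c where c: "ms = c *\<^sub>R u 1" "c = alpha \<or> c = - alpha" by blast
  have s1: "\<sigma> 1 > 0" using sig_pos[OF one_in_I] .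
  have c2: "c\<^sup>2 = xs (\<sigma> 1)" using c(2) alpha_sq by auto
  have "ms \<bullet> (S *v ms) = ra ms" by (simp add: ra_def)
  also have "\<dots> = \<sigma> 1 * c\<^sup>2" using ra_axis[OF one_in_I, of c] c by simp
  finally have a: "ms \<bullet> (S *v ms) = \<sigma> 1 * xs (\<sigma> 1)" using c2 by simp
  have "ms \<bullet> ((S ** S) *v ms) = rb ms" by (simp add: rb_def)
  also have "\<dots> = (\<sigma> 1)\<^sup>2 * c\<^sup>2" using rb_axis[OF one_in_I, of c] c by simp
  finally have b: "ms \<bullet> ((S ** S) *v ms) = \<sigma> 1 * (\<sigma> 1 * xs (\<sigma> 1))" using c2 by (simp add: power2_eq_square)
  have n1: "norm (u 1) = 1" using unit[of 1] one_in_I by simp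
  have nms: "norm ms = alpha" using c alpha_pos n1 by auto
  have "ms /\<^sub>R norm ms = u 1 \<or> ms /\<^sub>R norm ms = - u 1"
    using c alpha_pos nms by auto
  moreover
  define w where "w = kk * (real L + 2) * \<sigma> 1 * xs (\<sigma> 1)"
  have we: "w * (TT + (real L + 3) * \<sigma> 1) = TT + (real L + 1) * \<sigma> 1" using xs_eq[OF s1] w_def by simp
  have wl: "w < 1" using w_lt1[OF s1] w_def by simp
  define D where "D = - 2 * (real L + 1) + (real L + 3) * w"
  define N where "N = - 2 * TT + 2 * TT * w + (real L + 3) * \<sigma> 1 * w"
  have "(real L + 3) * w < (real L + 3) * 1" using wl L1 by (intro mult_strict_left_mono) auto
  then have D: "D < 0" unfolding D_def using L1 by (smt (verit))
  have ND: "N = - (\<sigma> 1 * D)" unfolding N_def D_def using we by (simp add: algebra_simps)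
  have eqD: "- 2 * (real L + 1) + (lam / real L) * (real L + 2) * (real L + 3) * (ms \<bullet> (S *v ms)) = D"
    unfolding D_def w_def a kk_def[symmetric] by (simp add: algebra_simps)
  have eqN: "- 2 * trace S + 2 * (lam / real L) * (real L + 2) * trace S * (ms \<bullet> (S *v ms))
           + (lam / real L) * (real L + 2) * (real L + 3) * (ms \<bullet> ((S ** S) *v ms)) = N"
    unfolding N_def w_def a b kk_def[symmetric] TT_def[symmetric] by (simp add: algebra_simps)
  have "\<sigma> 1 = - (N / D)" using ND D by simp
  ultimately show "(ms /\<^sub>R norm ms = u 1 \<or> ms /\<^sub>R norm ms = - u 1) \<and> \<sigma> 1 = - ((- 2 * trace S
                        + 2 * (lam / real L) * (real L + 2) * trace S * (ms \<bullet> (S *v ms))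
                        + (lam / real L) * (real L + 2) * (real L + 3) * (ms \<bullet> ((S ** S) *v ms)))
                      / (- 2 * (real L + 1)
                        + (lam / real L) * (real L + 2) * (real L + 3) * (ms \<bullet> (S *v ms))))"
    using eqD eqN by simp
qed

end


lemma vec_lip:
  fixes f :: "real \<Rightarrow> 'a::real_normed_vector"
  assumes d: "\<And>t. t \<ge> 0 \<Longrightarrow> (f has_vector_derivative f' t) (at t within {0..})"
    and b: "\<And>t. t \<ge> 0 \<Longrightarrow> norm (f' t) \<le> M"
    and s: "0 \<le> s" and t: "0 \<le> t"
  shows "norm (f t - f s) \<le> M * \<bar>t - s\<bar>"
proof -
  have "norm (f t - f s) \<le> M * norm (t - s)"
  proof (rule differentiable_bound[where f' = "\<lambda>t h. h *\<^sub>R f' t"])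
    show "convex {0::real..}" by (rule convex_real_interval)
    show "(f has_derivative (\<lambda>h. h *\<^sub>R f' x)) (at x within {0..})" if "x \<in> {0..}" for x
      using d[of x] that by (simp add: has_vector_derivative_def)
    show "onorm (\<lambda>h. h *\<^sub>R f' x) \<le> M" if "x \<in> {0..}" for x
      using onorm_scaleR_left[OF bounded_linear_ident, of "f' x"] onorm_id[where 'a=real] b[of x] that by simp
  qed (use s t in auto)
  then show ?thesis by simp
qed

lemma exp_sandwich:
  fixes v \<kappa> :: "real \<Rightarrow> real"
  assumes d: "\<And>t. t \<ge> 0 \<Longrightarrow> (v has_real_derivative \<kappa> t * v t) (at t within {0..})"
    and v0: "\<And>t. t \<ge> 0 \<Longrightarrow> v t \<ge> 0" and K: "\<And>t. t \<ge> 0 \<Longrightarrow> \<bar>\<kappa> t\<bar> \<le> K" and t: "t \<ge> 0"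
  shows "v t \<le> v 0 * exp (K * t)" "v 0 \<le> v t * exp (K * t)"
proof -
  have "v t * exp (- (K * t)) \<le> v 0 * exp (- (K * 0))"
  proof (rule deriv_nonpos_mono[OF order_refl t])
    fix s :: real assume s: "0 \<le> s" "s \<le> t"
    show "((\<lambda>s. v s * exp (- (K * s))) has_real_derivative (\<kappa> s - K) * v s * exp (- (K * s))) (at s within {0..})"
      by (rule derivative_eq_intros d[OF s(1)] refl)+ (simp add: algebra_simps)
    have "\<kappa> s - K \<le> 0" using K[OF s(1)] by simp
    then show "(\<kappa> s - K) * v s * exp (- (K * s)) \<le> 0"
      using v0[OF s(1)] by (simp add: mult_nonpos_nonneg)
  qed
  then have "v t * exp (- (K * t)) * exp (K * t) \<le> v 0 * exp (K * t)" by simp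
  then show "v t \<le> v 0 * exp (K * t)" by (simp add: mult.assoc exp_minus field_simps)
  have "- (v t * exp (K * t)) \<le> - (v 0 * exp (K * 0))"
  proof (rule deriv_nonpos_mono[OF order_refl t])
    fix s :: real assume s: "0 \<le> s" "s \<le> t"
    show "((\<lambda>s. - (v s * exp (K * s))) has_real_derivative - ((\<kappa> s + K) * v s * exp (K * s))) (at s within {0..})"
      by (rule derivative_eq_intros d[OF s(1)] refl)+ (simp add: algebra_simps)
    have "\<kappa> s + K \<ge> 0" using K[OF s(1)] by simp
    then show "- ((\<kappa> s + K) * v s * exp (K * s)) \<le> 0"
      using v0[OF s(1)] by simp
  qed
  then show "v 0 \<le> v t * exp (K * t)" by simp
qed

context P16 begin

lemma crit_coord: "grad x = 0 \<Longrightarrow> i \<in> {1..CARD('n)} \<Longrightarrow> (gA x + \<sigma> i * gB x) * (u i \<bullet> x) = 0"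
proof -
  assume g: "grad x = 0" and i: "i \<in> {1..CARD('n)}"
  have "2 * (gA x * \<sigma> i + gB x * (\<sigma> i)\<^sup>2) * (u i \<bullet> x) = 0" using grad_coord[OF i, of x] g by simp
  then have "\<sigma> i * ((gA x + \<sigma> i * gB x) * (u i \<bullet> x)) = 0" by (simp add: algebra_simps power2_eq_square)
  then show ?thesis using sig_pos[OF i] by simp
qed

lemma axis_expand: "j \<in> {1..CARD('n)} \<Longrightarrow> (\<And>i. i \<in> {1..CARD('n)} \<Longrightarrow> i \<noteq> j \<Longrightarrow> u i \<bullet> x = 0) \<Longrightarrow> x = (u j \<bullet> x) *\<^sub>R u j"
proof -
  assume j: "j \<in> {1..CARD('n)}" and z: "\<And>i. i \<in> {1..CARD('n)} \<Longrightarrow> i \<noteq> j \<Longrightarrow> u i \<bullet> x = 0"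
  have "x = (\<Sum>i\<in>{1..CARD('n)}. if i = j then (u i \<bullet> x) *\<^sub>R u i else 0)"
    by (subst expand) (rule sum.cong, auto simp: z)
  also have "\<dots> = (u j \<bullet> x) *\<^sub>R u j" using j by simp
  finally show ?thesis .
qed

lemma crit_cases:
  assumes g: "grad x = 0"
  shows "x = 0 \<or> (\<exists>j\<in>{1..CARD('n)}. \<exists>c. c \<noteq> 0 \<and> x = c *\<^sub>R u j \<and> c\<^sup>2 = xs (\<sigma> j))"
proof (cases "x = 0")
  case False
  have "\<exists>j\<in>{1..CARD('n)}. u j \<bullet> x \<noteq> 0"
  proof (rule ccontr)
    assume "\<not> ?thesis"
    then have "x = 0" using expand[of x] by simp
    then show False using False by simp
  qed
  then obtain j where j: "j \<in> {1..CARD('n)}" and cj: "u j \<bullet> x \<noteq> 0" by blast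
  have ej: "gA x + \<sigma> j * gB x = 0" using crit_coord[OF g j] cj by simp
  have rbpos: "rb x > 0"
  proof -
    have "(\<sigma> j)\<^sup>2 * (u j \<bullet> x)\<^sup>2 \<le> rb x" unfolding rb_coord
      by (rule member_le_sum[of j, OF j]) auto
    moreover have "(\<sigma> j)\<^sup>2 * (u j \<bullet> x)\<^sup>2 > 0" using cj sig_pos[OF j] by simp
    ultimately show ?thesis by linarith
  qed
  have others: "u i \<bullet> x = 0" if i: "i \<in> {1..CARD('n)}" "i \<noteq> j" for i
  proof (rule ccontr)
    assume ci: "u i \<bullet> x \<noteq> 0"
    have ei: "gA x + \<sigma> i * gB x = 0" using crit_coord[OF g i(1)] ci by simp
    have "(\<sigma> i - \<sigma> j) * gB x = (gA x + \<sigma> i * gB x) - (gA x + \<sigma> j * gB x)" by (simp add: algebra_simps)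
    then have "(\<sigma> i - \<sigma> j) * gB x = 0" using ei ej by simp
    moreover have "\<sigma> i \<noteq> \<sigma> j" using sig_inj i j by auto
    ultimately have gB0: "gB x = 0" by simp
    then have gA0: "gA x = 0" using ej by simp
    have "kk^2*(real L+2)*(real L+3)*ra x = 2*kk*(real L+1)" using gB0 unfolding gB_def by linarith
    moreover have "kk^2*(real L+2)*(real L+3)*ra x = kk * (kk * ((real L+2) * ra x) * (real L+3))"
      unfolding power2_eq_square by (simp only: ac_simps)
    moreover have "2*kk*(real L+1) = kk * (2*(real L+1))" by simp
    ultimately have "kk * (kk * ((real L+2) * ra x) * (real L+3)) = kk * (2*(real L+1))" by simp
    then have "kk * ((real L+2) * ra x) * (real L+3) = 2*(real L+1)" using kk_pos by simp
    then have "kk * ((real L+2) * ra x) * (real L+3) \<ge> 1 * (real L+3)" using L1 by simp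
    moreover have "(0::real) < real L+3" by simp
    ultimately have w1: "1 \<le> kk * ((real L+2) * ra x)" by (rule mult_right_le_imp_le)
    have e1: "2*kk^2*(real L+2)*TT*ra x = (2*kk*TT) * (kk * ((real L+2) * ra x))"
      unfolding power2_eq_square by (simp only: ac_simps)
    have "(2*kk*TT) * (kk * ((real L+2) * ra x)) \<ge> (2*kk*TT) * 1"
      using w1 kk_pos TT_pos by (intro mult_left_mono) auto
    moreover have "kk^2*(real L+2)*(real L+3)*rb x > 0" using rbpos kk_pos by simp
    ultimately have "gA x > 0" unfolding gA_def using e1 by linarith
    then show False using gA0 by simp
  qed
  define c where "c = u j \<bullet> x"
  have xc: "x = c *\<^sub>R u j" unfolding c_def by (rule axis_expand[OF j others]) auto
  have hh: "gA (c *\<^sub>R u j) + \<sigma> j * gB (c *\<^sub>R u j) = 0" using ej xc by simp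
  have "2 * kk * ((kk * (real L + 2) * \<sigma> j * c\<^sup>2) * (TT + (real L + 3) * \<sigma> j) - (TT + (real L + 1) * \<sigma> j)) = 0"
    using hh unfolding axis_crit_sum[OF j] .
  then have "(kk * (real L + 2) * \<sigma> j * c\<^sup>2) * (TT + (real L + 3) * \<sigma> j) - (TT + (real L + 1) * \<sigma> j) = 0"
    using kk_pos by simp
  then have "(kk * (real L + 2) * \<sigma> j * c\<^sup>2) * (TT + (real L + 3) * \<sigma> j) = TT + (real L + 1) * \<sigma> j"
    by simp
  then have "c\<^sup>2 = xs (\<sigma> j)" by (rule xs_unique[OF sig_pos[OF j]])
  moreover have "c \<noteq> 0" using cj unfolding c_def .
  ultimately show ?thesis using xc by (intro disjI2 bexI[OF _ j] exI[of _ c]) blast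
qed simp

lemma axis_is_crit: "j \<in> {1..CARD('n)} \<Longrightarrow> c\<^sup>2 = xs (\<sigma> j) \<Longrightarrow> gA (c *\<^sub>R u j) + \<sigma> j * gB (c *\<^sub>R u j) = 0"
proof -
  assume j: "j \<in> {1..CARD('n)}" and c: "c\<^sup>2 = xs (\<sigma> j)"
  have "(kk * (real L + 2) * \<sigma> j * c\<^sup>2) * (TT + (real L + 3) * \<sigma> j) = TT + (real L + 1) * \<sigma> j"
    using xs_eq[OF sig_pos[OF j]] c by simp
  then show ?thesis using axis_crit_sum[OF j, of c] by simp
qed

lemma crit_c1_zero:
  assumes g: "grad p = 0" and c1: "u 1 \<bullet> p = 0"
  shows "gA p + \<sigma> 1 * gB p < 0"
proof -
  from crit_cases[OF g] show ?thesis
  proof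
    assume "p = 0"
    have "TT * kk > 0" "kk * (\<sigma> 1 * (real L + 1)) > 0" using kk_pos TT_pos sig_pos[OF one_in_I] L1 by auto
    then show ?thesis unfolding gA_def gB_def ra_def rb_def \<open>p = 0\<close> by (simp add: algebra_simps)
  next
    assume "\<exists>j\<in>{1..CARD('n)}. \<exists>c. c \<noteq> 0 \<and> p = c *\<^sub>R u j \<and> c\<^sup>2 = xs (\<sigma> j)"
    then obtain j c where j: "j \<in> {1..CARD('n)}" and c: "c \<noteq> 0" "p = c *\<^sub>R u j" "c\<^sup>2 = xs (\<sigma> j)" by blast
    have "j \<noteq> 1"
    proof
      assume "j = 1"
      then have "u 1 \<bullet> p = c" using c u_unit[OF one_in_I] by simp
      then show False using c1 c by simp
    qed
    have "gA p + \<sigma> 1 * gB p = (gA p + \<sigma> j * gB p) + (\<sigma> 1 - \<sigma> j) * gB p" by (simp add: algebra_simps)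
    also have "gA p + \<sigma> j * gB p = 0" using axis_is_crit[OF j c(3)] c(2) by simp
    finally have e: "gA p + \<sigma> 1 * gB p = (\<sigma> 1 - \<sigma> j) * gB p" by simp
    have "\<sigma> 1 - \<sigma> j > 0" using sig1_max[OF j \<open>j \<noteq> 1\<close>] by simp
    moreover have "gB p < 0" using gB_axis_neg[OF j c(3)] c(2) by simp
    ultimately show ?thesis using e by (simp add: mult_pos_neg)
  qed
qed

lemma crit_c1_nonzero:
  assumes g: "grad p = 0" and c1: "u 1 \<bullet> p \<noteq> 0"
  shows "p = alpha *\<^sub>R u 1 \<or> p = - (alpha *\<^sub>R u 1)"
proof -
  from crit_cases[OF g] c1 obtain j c where j: "j \<in> {1..CARD('n)}" and c: "c \<noteq> 0" "p = c *\<^sub>R u j" "c\<^sup>2 = xs (\<sigma> j)"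
    by auto
  have "j = 1"
  proof (rule ccontr)
    assume "j \<noteq> 1"
    then have "u 1 \<bullet> u j = 0" using u_orth[OF one_in_I j] by simp
    then show False using c1 c by simp
  qed
  then have "c\<^sup>2 = alpha\<^sup>2" using c alpha_sq by simp
  then have "c = alpha \<or> c = - alpha" by (simp add: power2_eq_iff)
  then show ?thesis using c \<open>j = 1\<close> by auto
qed

lemma crit_value:
  assumes g: "grad p = 0"
  shows "(p = 0 \<and> R_lin lam L S p = TT) \<or> (\<exists>j\<in>{1..CARD('n)}. \<exists>c. c \<noteq> 0 \<and> p = c *\<^sub>R u j \<and> c\<^sup>2 = xs (\<sigma> j) \<and> R_lin lam L S p = mval (\<sigma> j))"
proof -
  from crit_cases[OF g] show ?thesis
  proof
    assume "p = 0" then show ?thesis using R_zero by simp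
  next
    assume "\<exists>j\<in>{1..CARD('n)}. \<exists>c. c \<noteq> 0 \<and> p = c *\<^sub>R u j \<and> c\<^sup>2 = xs (\<sigma> j)"
    then obtain j c where j: "j \<in> {1..CARD('n)}" and c: "c \<noteq> 0" "p = c *\<^sub>R u j" "c\<^sup>2 = xs (\<sigma> j)" by blast
    have "R_lin lam L S p = mval (\<sigma> j)" using R_axis[OF j c(3)] c(2) by simp
    then show ?thesis using j c by (intro disjI2 bexI[OF _ j] exI[of _ c]) auto
  qed
qed

end


lemma LB_isCont:
  fixes f :: "'a::euclidean_space \<Rightarrow> 'b::real_normed_vector"
  assumes "\<And>r. LB (cball 0 r) f"
  shows "isCont f x"
proof -
  obtain C where "C-lipschitz_on (cball 0 (norm x + 1)) f" using assms[of "norm x + 1"] unfolding LB_def by blast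
  then have "continuous_on (cball 0 (norm x + 1)) f" by (rule lipschitz_on_continuous_on)
  moreover have "x \<in> interior (cball 0 (norm x + 1))" by (simp add: dist_norm)
  ultimately show ?thesis using continuous_on_interior by blast
qed

context P16 begin

lemma LB_gA: "LB (cball 0 r) gA"
  unfolding gA_def[abs_def] power2_eq_square by (rule LB_add LB_diff LB_mult LB_const LB_ra LB_rb)+

lemma LB_gB: "LB (cball 0 r) gB"
  unfolding gB_def[abs_def] power2_eq_square by (rule LB_add LB_diff LB_mult LB_const LB_ra LB_rb)+

lemma isCont_grad: "isCont grad x" by (rule LB_isCont[OF LB_grad])
lemma isCont_gA: "isCont gA x" by (rule LB_isCont[OF LB_gA])
lemma isCont_gB: "isCont gB x" by (rule LB_isCont[OF LB_gB])
lemma isCont_R: "isCont (R_lin lam L S) x" by (rule LB_isCont[OF LB_R])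

lemma flow_deriv:
  assumes gf: "grad_flow (R_lin lam L S) mu mu0" and t: "t \<ge> 0"
  shows "(mu has_vector_derivative - grad (mu t)) (at t within {0..})"
proof -
  obtain g where "GDERIV (R_lin lam L S) (mu t) :> g" "(mu has_vector_derivative - g) (at t within {0..})"
    using gf t unfolding grad_flow_def by blast
  then show ?thesis using grad_unique by blast
qed

lemma flow_R_deriv:
  assumes gf: "grad_flow (R_lin lam L S) mu mu0" and t: "t \<ge> 0"
  shows "((\<lambda>t. R_lin lam L S (mu t)) has_real_derivative - (grad (mu t) \<bullet> grad (mu t))) (at t within {0..})"
  using R_chain[OF flow_deriv[OF gf t]] by simp

lemma flow_R_mono:
  assumes gf: "grad_flow (R_lin lam L S) mu mu0" and st: "0 \<le> s" "s \<le> t"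
  shows "R_lin lam L S (mu t) \<le> R_lin lam L S (mu s)"
proof (rule deriv_nonpos_mono[OF st])
  fix r assume "s \<le> r" "r \<le> t"
  then show "((\<lambda>t. R_lin lam L S (mu t)) has_real_derivative - (grad (mu r) \<bullet> grad (mu r))) (at r within {0..})"
    using flow_R_deriv[OF gf, of r] st by simp
qed simp

lemma flow_bound:
  assumes gf: "grad_flow (R_lin lam L S) mu mu0"
  shows "\<exists>\<rho>>0. \<forall>t\<ge>0. norm (mu t) < \<rho>"
proof -
  obtain \<rho> where \<rho>: "\<rho> > 0" "\<And>x. R_lin lam L S x \<le> R_lin lam L S (mu 0) \<Longrightarrow> norm x < \<rho>"
    using sublevel by blast
  have "norm (mu t) < \<rho>" if "t \<ge> 0" for t using \<rho>(2) flow_R_mono[OF gf order_refl that] by blast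
  then show ?thesis using \<rho>(1) by blast
qed

lemma flow_R_limit:
  assumes gf: "grad_flow (R_lin lam L S) mu mu0"
  shows "\<exists>Rinf. ((\<lambda>t. R_lin lam L S (mu t)) \<longlongrightarrow> Rinf) at_top \<and> (\<forall>t\<ge>0. Rinf \<le> R_lin lam L S (mu t))"
proof -
  define Rm where "Rm t = R_lin lam L S (mu t)" for t
  define Rinf where "Rinf = (INF t\<in>{0::real..}. Rm t)"
  have bdd: "bdd_below (Rm ` {0..})" unfolding Rm_def using R_ge_min by (intro bdd_belowI2) auto
  have low: "Rinf \<le> Rm t" if "t \<ge> 0" for t unfolding Rinf_def using bdd that by (intro cINF_lower) auto
  have "(Rm \<longlongrightarrow> Rinf) at_top"
  proof (rule tendstoI)
    fix e :: real assume e: "e > 0"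
    have "(INF t\<in>{0::real..}. Rm t) < Rinf + e" using e Rinf_def by simp
    then have "\<exists>x\<in>{0..}. Rm x < Rinf + e" by (subst (asm) cINF_less_iff[OF _ bdd]) auto
    then obtain t0 where t0: "t0 \<in> {0..}" "Rm t0 < Rinf + e" by blast
    have "\<forall>t\<ge>t0. dist (Rm t) Rinf < e"
    proof (intro allI impI)
      fix t assume t: "t \<ge> t0"
      have "Rm t \<le> Rm t0" unfolding Rm_def using flow_R_mono[OF gf _ t] t0 by auto
      moreover have "Rinf \<le> Rm t" using low t t0 by auto
      ultimately show "dist (Rm t) Rinf < e" using t0 by (simp add: dist_real_def)
    qed
    then show "\<forall>\<^sub>F t in at_top. dist (Rm t) Rinf < e" unfolding eventually_at_top_linorder by blast
  qed
  then show ?thesis using low unfolding Rm_def by blast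
qed

lemma flow_grad_zero:
  assumes gf: "grad_flow (R_lin lam L S) mu mu0"
  shows "((\<lambda>t. grad (mu t)) \<longlongrightarrow> 0) at_top"
proof (rule ccontr)
  assume nc: "\<not> ((\<lambda>t. grad (mu t)) \<longlongrightarrow> 0) at_top"
  obtain \<rho> where \<rho>: "\<rho> > 0" "\<And>t. t \<ge> 0 \<Longrightarrow> norm (mu t) < \<rho>" using flow_bound[OF gf] by blast
  obtain Rinf where Rl: "((\<lambda>t. R_lin lam L S (mu t)) \<longlongrightarrow> Rinf) at_top" and Rlow: "\<And>t. t \<ge> 0 \<Longrightarrow> Rinf \<le> R_lin lam L S (mu t)"
    using flow_R_limit[OF gf] by blast
  obtain Cg Mg where Cg: "Cg-lipschitz_on (cball 0 \<rho>) grad" and Mg: "0 \<le> Mg" "\<And>x. x \<in> cball 0 \<rho> \<Longrightarrow> norm (grad x) \<le> Mg"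
    using LB_grad[of \<rho>] by (metis LBE)
  have Cg0: "Cg \<ge> 0" using Cg lipschitz_on_nonneg by blast
  have inball: "mu t \<in> cball 0 \<rho>" if "t \<ge> 0" for t using \<rho>(2)[OF that] by simp
  from nc obtain \<epsilon> where \<epsilon>: "\<epsilon> > 0" and nev: "\<not> (\<forall>\<^sub>F t in at_top. dist (grad (mu t)) 0 < \<epsilon>)"
    unfolding tendsto_iff by blast
  have freq: "\<exists>t\<ge>N. norm (grad (mu t)) \<ge> \<epsilon>" for N
    using nev unfolding eventually_at_top_linorder by (auto simp: not_less)
  define h where "h = \<epsilon> / (2 * (Cg * Mg + 1))"
  have h: "h > 0" unfolding h_def using \<epsilon> Cg0 Mg by (simp add: add_nonneg_pos)
  have hCM: "Cg * Mg * h \<le> \<epsilon> / 2"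
  proof -
    have "Cg * Mg * h = (\<epsilon> / 2) * (Cg * Mg / (Cg * Mg + 1))" unfolding h_def by (simp add: field_simps)
    also have "\<dots> \<le> (\<epsilon> / 2) * 1"
    proof (intro mult_left_mono)
      have "Cg * Mg \<ge> 0" using Cg0 Mg by simp
      then show "Cg * Mg / (Cg * Mg + 1) \<le> 1" by (simp add: divide_le_eq_1)
    qed (use \<epsilon> in simp)
    finally show ?thesis by simp
  qed
  define \<delta> where "\<delta> = (\<epsilon>\<^sup>2 / 4) * h"
  have \<delta>: "\<delta> > 0" unfolding \<delta>_def using \<epsilon> h by simp
  have drop: "R_lin lam L S (mu (t + h)) \<le> R_lin lam L S (mu t) - \<delta>"
    if t: "t \<ge> 0" and gt: "norm (grad (mu t)) \<ge> \<epsilon>" for t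
  proof -
    have big: "grad (mu s) \<bullet> grad (mu s) \<ge> \<epsilon>\<^sup>2 / 4" if s: "t \<le> s" "s \<le> t + h" for s
    proof -
      have "norm (mu s - mu t) \<le> Mg * \<bar>s - t\<bar>"
        by (rule vec_lip[OF flow_deriv[OF gf]]) (use Mg inball t s in auto)
      also have "\<dots> \<le> Mg * h" using s Mg by (intro mult_left_mono) auto
      finally have d1: "norm (mu s - mu t) \<le> Mg * h" .
      have "norm (grad (mu s) - grad (mu t)) \<le> Cg * norm (mu s - mu t)"
        by (rule lipschitz_on_normD[OF Cg]) (use inball t s in auto)
      also have "\<dots> \<le> Cg * (Mg * h)" using d1 Cg0 by (intro mult_left_mono) auto
      also have "\<dots> \<le> \<epsilon> / 2" using hCM by (simp add: mult.assoc)
      finally have "norm (grad (mu s) - grad (mu t)) \<le> \<epsilon> / 2" .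
      then have "norm (grad (mu s)) \<ge> \<epsilon> / 2" using gt norm_triangle_sub[of "grad (mu t)" "grad (mu s)"]
        by (simp add: norm_minus_commute)
      then have "(norm (grad (mu s)))\<^sup>2 \<ge> (\<epsilon> / 2)\<^sup>2" using \<epsilon> by (intro power_mono) auto
      then show ?thesis by (simp add: power2_norm_eq_inner power_divide)
    qed
    have "R_lin lam L S (mu (t + h)) + (\<epsilon>\<^sup>2 / 4) * (t + h) \<le> R_lin lam L S (mu t) + (\<epsilon>\<^sup>2 / 4) * t"
    proof (rule deriv_nonpos_mono[where f = "\<lambda>s. R_lin lam L S (mu s) + (\<epsilon>\<^sup>2 / 4) * s"])
      show "0 \<le> t" "t \<le> t + h" using t h by auto
      fix s assume s: "t \<le> s" "s \<le> t + h"
      show "((\<lambda>s. R_lin lam L S (mu s) + (\<epsilon>\<^sup>2 / 4) * s) has_real_derivative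
              - (grad (mu s) \<bullet> grad (mu s)) + (\<epsilon>\<^sup>2 / 4)) (at s within {0..})"
        by (rule derivative_eq_intros flow_R_deriv[OF gf] refl | use s t in simp)+
      show "- (grad (mu s) \<bullet> grad (mu s)) + (\<epsilon>\<^sup>2 / 4) \<le> 0" using big[OF s] by simp
    qed
    moreover have "(\<epsilon>\<^sup>2 / 4) * (t + h) = (\<epsilon>\<^sup>2 / 4) * t + (\<epsilon>\<^sup>2 / 4) * h" by (simp add: distrib_left)
    ultimately show ?thesis unfolding \<delta>_def by linarith
  qed
  have "\<forall>\<^sub>F t in at_top. R_lin lam L S (mu t) < Rinf + \<delta>"
    using order_tendstoD(2)[OF Rl] \<delta> by simp
  then obtain N where N: "\<And>t. t \<ge> N \<Longrightarrow> R_lin lam L S (mu t) < Rinf + \<delta>"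
    unfolding eventually_at_top_linorder by blast
  obtain t where t: "t \<ge> max N 0" "norm (grad (mu t)) \<ge> \<epsilon>" using freq by blast
  have "R_lin lam L S (mu (t + h)) \<le> R_lin lam L S (mu t) - \<delta>" using drop t by simp
  also have "\<dots> < Rinf" using N[of t] t by simp
  finally show False using Rlow[of "t + h"] t h by simp
qed

end


context P16 begin

lemma flow_mu0: "grad_flow (R_lin lam L S) mu mu0 \<Longrightarrow> mu 0 = mu0"
  unfolding grad_flow_def by simp

lemma flow_coord_deriv:
  assumes gf: "grad_flow (R_lin lam L S) mu mu0" and j: "j \<in> {1..CARD('n)}" and t: "t \<ge> 0"
  shows "((\<lambda>t. (u j \<bullet> mu t)\<^sup>2) has_real_derivative
           (-4 * \<sigma> j * (gA (mu t) + \<sigma> j * gB (mu t))) * (u j \<bullet> mu t)\<^sup>2) (at t within {0..})"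
proof -
  have "((\<lambda>t. u j \<bullet> mu t) has_vector_derivative u j \<bullet> (- grad (mu t))) (at t within {0..})"
    by (rule bounded_linear.has_vector_derivative[OF bounded_linear_inner_right flow_deriv[OF gf t]])
  then have dc: "((\<lambda>t. u j \<bullet> mu t) has_real_derivative - (2 * (gA (mu t) * \<sigma> j + gB (mu t) * (\<sigma> j)\<^sup>2) * (u j \<bullet> mu t))) (at t within {0..})"
    using grad_coord[OF j, of "mu t"] by (simp add: has_real_derivative_iff_has_vector_derivative inner_minus_right)
  have "((\<lambda>t. (u j \<bullet> mu t) ^ 2) has_real_derivative of_nat 2 * ((- (2 * (gA (mu t) * \<sigma> j + gB (mu t) * (\<sigma> j)\<^sup>2) * (u j \<bullet> mu t))) * (u j \<bullet> mu t) ^ (2 - Suc 0))) (at t within {0..})"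
    by (rule DERIV_power[OF dc])
  then show ?thesis
    by (rule DERIV_cong) (simp add: algebra_simps power2_eq_square)
qed

lemma flow_coord_sandwich:
  assumes gf: "grad_flow (R_lin lam L S) mu mu0" and j: "j \<in> {1..CARD('n)}"
  shows "\<exists>K. \<forall>t\<ge>0. (u j \<bullet> mu t)\<^sup>2 \<le> (u j \<bullet> mu 0)\<^sup>2 * exp (K * t) \<and> (u j \<bullet> mu 0)\<^sup>2 \<le> (u j \<bullet> mu t)\<^sup>2 * exp (K * t)"
proof -
  obtain \<rho> where \<rho>: "\<rho> > 0" "\<And>t. t \<ge> 0 \<Longrightarrow> norm (mu t) < \<rho>" using flow_bound[OF gf] by blast
  obtain CA BA where BA: "0 \<le> BA" "\<And>x. x \<in> cball 0 \<rho> \<Longrightarrow> norm (gA x) \<le> BA" using LB_gA[of \<rho>] by (metis LBE)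
  obtain CB BB where BB: "0 \<le> BB" "\<And>x. x \<in> cball 0 \<rho> \<Longrightarrow> norm (gB x) \<le> BB" using LB_gB[of \<rho>] by (metis LBE)
  define K where "K = 4 * \<sigma> j * (BA + \<sigma> j * BB)"
  define \<kappa> where "\<kappa> t = -4 * \<sigma> j * (gA (mu t) + \<sigma> j * gB (mu t))" for t
  have sj: "\<sigma> j > 0" using sig_pos[OF j] .
  have Kb: "\<bar>\<kappa> t\<bar> \<le> K" if t: "t \<ge> 0" for t
  proof -
    have m: "mu t \<in> cball 0 \<rho>" using \<rho>(2)[OF t] by simp
    have "\<bar>gA (mu t) + \<sigma> j * gB (mu t)\<bar> \<le> \<bar>gA (mu t)\<bar> + \<sigma> j * \<bar>gB (mu t)\<bar>"
      using sj by (simp add: abs_mult order_trans[OF abs_triangle_ineq])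
    also have "\<dots> \<le> BA + \<sigma> j * BB" using BA(2)[OF m] BB(2)[OF m] sj by (intro add_mono mult_left_mono) auto
    finally have "\<bar>gA (mu t) + \<sigma> j * gB (mu t)\<bar> \<le> BA + \<sigma> j * BB" .
    then have "4 * \<sigma> j * \<bar>gA (mu t) + \<sigma> j * gB (mu t)\<bar> \<le> 4 * \<sigma> j * (BA + \<sigma> j * BB)"
      using sj by (intro mult_left_mono) auto
    then show ?thesis unfolding \<kappa>_def K_def using sj by (simp add: abs_mult)
  qed
  have d: "((\<lambda>t. (u j \<bullet> mu t)\<^sup>2) has_real_derivative \<kappa> t * (u j \<bullet> mu t)\<^sup>2) (at t within {0..})" if "t \<ge> 0" for t
    unfolding \<kappa>_def by (rule flow_coord_deriv[OF gf j that])
  show ?thesis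
    using exp_sandwich[where v = "\<lambda>t. (u j \<bullet> mu t)\<^sup>2", OF d _ Kb] by auto
qed

lemma flow_coord_zero_fwd:
  assumes gf: "grad_flow (R_lin lam L S) mu mu0" and j: "j \<in> {1..CARD('n)}" and z: "u j \<bullet> mu0 = 0" and t: "t \<ge> 0"
  shows "u j \<bullet> mu t = 0"
proof -
  obtain K where K: "\<And>t. t \<ge> 0 \<Longrightarrow> (u j \<bullet> mu t)\<^sup>2 \<le> (u j \<bullet> mu 0)\<^sup>2 * exp (K * t)"
    using flow_coord_sandwich[OF gf j] by blast
  have "(u j \<bullet> mu t)\<^sup>2 \<le> 0" using K[OF t] z flow_mu0[OF gf] by simp
  then show ?thesis by simp
qed

lemma flow_coord_zero_bwd:
  assumes gf: "grad_flow (R_lin lam L S) mu mu0" and j: "j \<in> {1..CARD('n)}" and t: "t \<ge> 0" and z: "u j \<bullet> mu t = 0"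
  shows "u j \<bullet> mu0 = 0"
proof -
  obtain K where K: "\<And>t. t \<ge> 0 \<Longrightarrow> (u j \<bullet> mu 0)\<^sup>2 \<le> (u j \<bullet> mu t)\<^sup>2 * exp (K * t)"
    using flow_coord_sandwich[OF gf j] by blast
  have "(u j \<bullet> mu 0)\<^sup>2 \<le> 0" using K[OF t] z by simp
  then show ?thesis using flow_mu0[OF gf] by simp
qed

lemma flow_cont: "grad_flow (R_lin lam L S) mu mu0 \<Longrightarrow> continuous_on {0..b} mu"
  unfolding continuous_on_eq_continuous_within
proof
  fix x assume gf: "grad_flow (R_lin lam L S) mu mu0" and x: "x \<in> {0..b}"
  have "continuous (at x within {0..}) mu"
    using flow_deriv[OF gf] x by (auto intro: has_vector_derivative_continuous)
  then show "continuous (at x within {0..b}) mu" by (rule continuous_within_subset) auto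
qed

lemma flow_sign:
  assumes gf: "grad_flow (R_lin lam L S) mu mu0" and j: "j \<in> {1..CARD('n)}" and nz: "u j \<bullet> mu0 \<noteq> 0" and t: "t \<ge> 0"
  shows "(u j \<bullet> mu t) * (u j \<bullet> mu0) > 0"
proof (rule ccontr)
  define c where "c s = u j \<bullet> mu s" for s
  assume "\<not> ?thesis"
  then have le: "c t * c 0 \<le> 0" unfolding c_def using flow_mu0[OF gf] by simp
  have cc: "continuous_on {0..t} c" unfolding c_def by (intro continuous_intros flow_cont[OF gf])
  have c0: "c 0 \<noteq> 0" unfolding c_def using nz flow_mu0[OF gf] by simp
  have "\<exists>x. 0 \<le> x \<and> x \<le> t \<and> c x = 0"
  proof (cases "c 0 > 0")
    case True
    then have "c t \<le> 0" using le by (simp add: mult_le_0_iff)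
    then show ?thesis using IVT2'[of c t 0 0, OF _ _ t cc] True by simp
  next
    case False
    then have "c 0 < 0" using c0 by simp
    then have "c t \<ge> 0" using le by (simp add: mult_le_0_iff)
    then show ?thesis using IVT'[of c 0 0 t, OF _ _ t cc] \<open>c 0 < 0\<close> by simp
  qed
  then obtain x where x: "0 \<le> x" "c x = 0" by blast
  then have "u j \<bullet> mu0 = 0" using flow_coord_zero_bwd[OF gf j x(1)] unfolding c_def by simp
  then show False using nz by simp
qed

lemma flow_limpt:
  assumes gf: "grad_flow (R_lin lam L S) mu mu0"
    and s: "filterlim s at_top sequentially" and q: "(\<lambda>k. mu (s k)) \<longlonglongrightarrow> q"
    and Rl: "((\<lambda>t. R_lin lam L S (mu t)) \<longlongrightarrow> Rinf) at_top"
  shows "grad q = 0" "R_lin lam L S q = Rinf"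
proof -
  have "(\<lambda>k. grad (mu (s k))) \<longlonglongrightarrow> grad q" by (rule isCont_tendsto_compose[OF isCont_grad q])
  moreover have "(\<lambda>k. grad (mu (s k))) \<longlonglongrightarrow> 0" by (rule filterlim_compose[OF flow_grad_zero[OF gf] s])
  ultimately show "grad q = 0" by (rule LIMSEQ_unique)
  have "(\<lambda>k. R_lin lam L S (mu (s k))) \<longlonglongrightarrow> R_lin lam L S q" by (rule isCont_tendsto_compose[OF isCont_R q])
  moreover have "(\<lambda>k. R_lin lam L S (mu (s k))) \<longlonglongrightarrow> Rinf" by (rule filterlim_compose[OF Rl s])
  ultimately show "R_lin lam L S q = Rinf" by (rule LIMSEQ_unique)
qed

end


context P16 begin

lemma mval_inj: "i \<in> {1..CARD('n)} \<Longrightarrow> j \<in> {1..CARD('n)} \<Longrightarrow> mval (\<sigma> i) = mval (\<sigma> j) \<Longrightarrow> i = j"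
proof -
  assume i: "i \<in> {1..CARD('n)}" and j: "j \<in> {1..CARD('n)}" and e: "mval (\<sigma> i) = mval (\<sigma> j)"
  have "\<sigma> i = \<sigma> j"
  proof (cases "\<sigma> i" "\<sigma> j" rule: linorder_cases)
    case less then show ?thesis using mval_mono[OF sig_pos[OF i] less] e by simp
  next
    case greater then show ?thesis using mval_mono[OF sig_pos[OF j] greater] e by simp
  qed simp
  then show ?thesis using sig_inj i j by blast
qed

lemma limpt_sign:
  assumes gf: "grad_flow (R_lin lam L S) mu mu0" and j: "j \<in> {1..CARD('n)}"
    and s: "filterlim s at_top sequentially" and q: "(\<lambda>k. mu (s k)) \<longlonglongrightarrow> q"
    and nz: "u j \<bullet> q \<noteq> 0"
  shows "u j \<bullet> mu0 \<noteq> 0" "(u j \<bullet> q) * (u j \<bullet> mu0) \<ge> 0"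
proof -
  have lim: "(\<lambda>k. u j \<bullet> mu (s k)) \<longlonglongrightarrow> u j \<bullet> q" by (intro tendsto_intros q)
  have ev: "\<forall>\<^sub>F k in sequentially. s k \<ge> 0" using s by (simp add: filterlim_at_top)
  show nz0: "u j \<bullet> mu0 \<noteq> 0"
  proof
    assume z: "u j \<bullet> mu0 = 0"
    have "\<forall>\<^sub>F k in sequentially. u j \<bullet> mu (s k) = 0"
      using ev by eventually_elim (rule flow_coord_zero_fwd[OF gf j z])
    then have "(\<lambda>k. u j \<bullet> mu (s k)) \<longlonglongrightarrow> 0" by (rule tendsto_eventually)
    then have "u j \<bullet> q = 0" using lim LIMSEQ_unique by blast
    then show False using nz by simp
  qed
  have "(\<lambda>k. (u j \<bullet> mu (s k)) * (u j \<bullet> mu0)) \<longlonglongrightarrow> (u j \<bullet> q) * (u j \<bullet> mu0)" by (intro tendsto_intros lim)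
  moreover have "\<forall>\<^sub>F k in sequentially. 0 \<le> (u j \<bullet> mu (s k)) * (u j \<bullet> mu0)"
    using ev by eventually_elim (use flow_sign[OF gf j nz0] in force)
  ultimately show "(u j \<bullet> q) * (u j \<bullet> mu0) \<ge> 0" by (rule tendsto_lowerbound) simp
qed

lemma limpt_unique:
  assumes gf: "grad_flow (R_lin lam L S) mu mu0"
    and s1: "filterlim s1 at_top sequentially" and q1: "(\<lambda>k. mu (s1 k)) \<longlonglongrightarrow> q1"
    and s2: "filterlim s2 at_top sequentially" and q2: "(\<lambda>k. mu (s2 k)) \<longlonglongrightarrow> q2"
  shows "q1 = q2"
proof -
  obtain Rinf where Rl: "((\<lambda>t. R_lin lam L S (mu t)) \<longlongrightarrow> Rinf) at_top" using flow_R_limit[OF gf] by blast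
  note L1 = flow_limpt[OF gf s1 q1 Rl] and L2 = flow_limpt[OF gf s2 q2 Rl]
  have Req: "R_lin lam L S q1 = R_lin lam L S q2" using L1(2) L2(2) by simp
  have axis_case: "q1 = q2" if a1: "j \<in> {1..CARD('n)}" "c1 \<noteq> 0" "q1 = c1 *\<^sub>R u j" "c1\<^sup>2 = xs (\<sigma> j)"
      and a2: "c2 \<noteq> 0" "q2 = c2 *\<^sub>R u j" "c2\<^sup>2 = xs (\<sigma> j)" for j c1 c2
  proof -
    have e1: "u j \<bullet> q1 = c1" using a1 u_unit by simp
    have e2: "u j \<bullet> q2 = c2" using a1(1) a2 u_unit by simp
    have "u j \<bullet> mu0 \<noteq> 0" and p1: "c1 * (u j \<bullet> mu0) \<ge> 0"
      using limpt_sign[OF gf a1(1) s1 q1] e1 a1(2) by auto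
    moreover have p2: "c2 * (u j \<bullet> mu0) \<ge> 0" using limpt_sign[OF gf a1(1) s2 q2] e2 a2(1) by auto
    moreover have "c1\<^sup>2 = c2\<^sup>2" using a1(4) a2(3) by simp
    then have "c1 = c2 \<or> c1 = - c2" by (simp add: power2_eq_iff)
    ultimately have "c1 = c2"
    proof -
      assume m: "u j \<bullet> mu0 \<noteq> 0" and p1: "c1 * (u j \<bullet> mu0) \<ge> 0" and p2: "c2 * (u j \<bullet> mu0) \<ge> 0"
        and o: "c1 = c2 \<or> c1 = - c2"
      show "c1 = c2"
      proof (rule ccontr)
        assume "c1 \<noteq> c2"
        then have "c1 = - c2" using o by simp
        then have "c1 * (u j \<bullet> mu0) = 0" using p1 p2 by simp
        then show False using m a1(2) by simp
      qed
    qed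
    then show ?thesis using a1(3) a2(2) by simp
  qed
  from crit_value[OF L1(1)] show ?thesis
  proof
    assume h1: "q1 = 0 \<and> R_lin lam L S q1 = TT"
    from crit_value[OF L2(1)] show ?thesis
    proof
      assume "q2 = 0 \<and> R_lin lam L S q2 = TT" then show ?thesis using h1 by simp
    next
      assume "\<exists>j\<in>{1..CARD('n)}. \<exists>c. c \<noteq> 0 \<and> q2 = c *\<^sub>R u j \<and> c\<^sup>2 = xs (\<sigma> j) \<and> R_lin lam L S q2 = mval (\<sigma> j)"
      then obtain j where j: "j \<in> {1..CARD('n)}" "R_lin lam L S q2 = mval (\<sigma> j)" by blast
      then show ?thesis using h1 Req mval_lt_TT[OF sig_pos[OF j(1)]] by simp
    qed
  next
    assume "\<exists>j\<in>{1..CARD('n)}. \<exists>c. c \<noteq> 0 \<and> q1 = c *\<^sub>R u j \<and> c\<^sup>2 = xs (\<sigma> j) \<and> R_lin lam L S q1 = mval (\<sigma> j)"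
    then obtain i c1 where i: "i \<in> {1..CARD('n)}" "c1 \<noteq> 0" "q1 = c1 *\<^sub>R u i" "c1\<^sup>2 = xs (\<sigma> i)" "R_lin lam L S q1 = mval (\<sigma> i)"
      by blast
    from crit_value[OF L2(1)] show ?thesis
    proof
      assume "q2 = 0 \<and> R_lin lam L S q2 = TT"
      then show ?thesis using i Req mval_lt_TT[OF sig_pos[OF i(1)]] by simp
    next
      assume "\<exists>j\<in>{1..CARD('n)}. \<exists>c. c \<noteq> 0 \<and> q2 = c *\<^sub>R u j \<and> c\<^sup>2 = xs (\<sigma> j) \<and> R_lin lam L S q2 = mval (\<sigma> j)"
      then obtain j c2 where j: "j \<in> {1..CARD('n)}" "c2 \<noteq> 0" "q2 = c2 *\<^sub>R u j" "c2\<^sup>2 = xs (\<sigma> j)" "R_lin lam L S q2 = mval (\<sigma> j)"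
        by blast
      have "i = j" using mval_inj[OF i(1) j(1)] i(5) j(5) Req by simp
      then show ?thesis using axis_case[OF i(1-4)] j(2-4) by simp
    qed
  qed
qed

lemma flow_converges:
  assumes gf: "grad_flow (R_lin lam L S) mu mu0"
  shows "\<exists>p. grad p = 0 \<and> (mu \<longlongrightarrow> p) at_top"
proof -
  obtain \<rho> where \<rho>: "\<rho> > 0" "\<And>t. t \<ge> 0 \<Longrightarrow> norm (mu t) < \<rho>" using flow_bound[OF gf] by blast
  have sc: "seq_compact (cball (0::real^'n) \<rho>)" by (rule compact_imp_seq_compact[OF compact_cball])
  have inb: "mu t \<in> cball 0 \<rho>" if "t \<ge> 0" for t using \<rho>(2)[OF that] by simp
  have inb1: "\<forall>k. mu (real k) \<in> cball 0 \<rho>" using inb by simp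
  obtain q r where "q \<in> cball 0 \<rho>" and r: "strict_mono r" and q: "((\<lambda>k. mu (real k)) \<circ> r) \<longlonglongrightarrow> q"
    by (rule seq_compactE[OF sc inb1])
  define s1 where "s1 k = real (r k)" for k
  have s1: "filterlim s1 at_top sequentially"
    unfolding s1_def by (rule filterlim_compose[OF filterlim_real_sequentially filterlim_subseq[OF r]])
  have q1: "(\<lambda>k. mu (s1 k)) \<longlonglongrightarrow> q" using q unfolding s1_def o_def .
  obtain Rinf where Rl: "((\<lambda>t. R_lin lam L S (mu t)) \<longlongrightarrow> Rinf) at_top" using flow_R_limit[OF gf] by blast
  have gq: "grad q = 0" using flow_limpt(1)[OF gf s1 q1 Rl] .
  have "(mu \<longlongrightarrow> q) at_top"
  proof (rule ccontr)
    assume "\<not> (mu \<longlongrightarrow> q) at_top"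
    then obtain \<epsilon> where \<epsilon>: "\<epsilon> > 0" and nev: "\<not> (\<forall>\<^sub>F t in at_top. dist (mu t) q < \<epsilon>)"
      unfolding tendsto_iff by blast
    have "\<forall>N. \<exists>t\<ge>N. dist (mu t) q \<ge> \<epsilon>"
      using nev unfolding eventually_at_top_linorder by (auto simp: not_less)
    then have "\<forall>k::nat. \<exists>t. t \<ge> real k \<and> dist (mu t) q \<ge> \<epsilon>" by blast
    from choice[OF this] obtain T where T': "\<forall>k. T k \<ge> real k \<and> dist (mu (T k)) q \<ge> \<epsilon>" by blast
    then have T: "\<And>k. T k \<ge> real k" "\<And>k. dist (mu (T k)) q \<ge> \<epsilon>" by auto
    have Tl: "filterlim T at_top sequentially"
      by (rule filterlim_at_top_mono[OF filterlim_real_sequentially]) (use T(1) in auto)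
    have inb2: "\<forall>k. mu (T k) \<in> cball 0 \<rho>" using inb T(1) by (meson of_nat_0_le_iff order_trans)
    obtain q2 r2 where r2: "strict_mono r2" and q2: "((\<lambda>k. mu (T k)) \<circ> r2) \<longlonglongrightarrow> q2"
      by (rule seq_compactE[OF sc inb2])
    define s2 where "s2 k = T (r2 k)" for k
    have s2: "filterlim s2 at_top sequentially"
      unfolding s2_def by (rule filterlim_compose[OF Tl filterlim_subseq[OF r2]])
    have q2': "(\<lambda>k. mu (s2 k)) \<longlonglongrightarrow> q2" using q2 unfolding s2_def o_def .
    have "q = q2" by (rule limpt_unique[OF gf s1 q1 s2 q2'])
    have "(\<lambda>k. dist (mu (s2 k)) q) \<longlonglongrightarrow> dist q2 q" by (intro tendsto_intros q2')
    moreover have "\<forall>\<^sub>F k in sequentially. \<epsilon> \<le> dist (mu (s2 k)) q" unfolding s2_def using T(2) by simp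
    ultimately have "\<epsilon> \<le> dist q2 q" by (rule tendsto_lowerbound) simp
    then show False using \<open>q = q2\<close> \<epsilon> by simp
  qed
  then show ?thesis using gq by blast
qed

lemma flow_c1:
  assumes gf: "grad_flow (R_lin lam L S) mu mu0" and nz: "u 1 \<bullet> mu0 \<noteq> 0"
  shows "(mu \<longlongrightarrow> alpha *\<^sub>R u 1) at_top \<or> (mu \<longlongrightarrow> - (alpha *\<^sub>R u 1)) at_top"
proof -
  obtain p where gp: "grad p = 0" and lim: "(mu \<longlongrightarrow> p) at_top" using flow_converges[OF gf] by blast
  show ?thesis
  proof (cases "u 1 \<bullet> p = 0")
    case False
    then show ?thesis using crit_c1_nonzero[OF gp] lim by auto
  next
    case True
    have neg: "gA p + \<sigma> 1 * gB p < 0" by (rule crit_c1_zero[OF gp True])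
    have "((\<lambda>t. gA (mu t) + \<sigma> 1 * gB (mu t)) \<longlongrightarrow> gA p + \<sigma> 1 * gB p) at_top"
      by (intro tendsto_intros isCont_tendsto_compose[OF isCont_gA lim] isCont_tendsto_compose[OF isCont_gB lim])
    then have "\<forall>\<^sub>F t in at_top. gA (mu t) + \<sigma> 1 * gB (mu t) < 0" using neg by (rule order_tendstoD(2))
    then obtain N where N: "\<And>t. t \<ge> N \<Longrightarrow> gA (mu t) + \<sigma> 1 * gB (mu t) < 0"
      unfolding eventually_at_top_linorder by blast
    define T1 where "T1 = max N 0"
    define v where "v t = (u 1 \<bullet> mu t)\<^sup>2" for t
    have s1: "\<sigma> 1 > 0" using sig_pos[OF one_in_I] .
    have mono: "v T1 \<le> v t" if t: "t \<ge> T1" for t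
    proof -
      have "- v t \<le> - v T1"
      proof (rule deriv_nonpos_mono[where f = "\<lambda>t. - v t"])
        show "0 \<le> T1" "T1 \<le> t" using t unfolding T1_def by auto
        fix s assume s: "T1 \<le> s" "s \<le> t"
        have s0: "s \<ge> 0" "s \<ge> N" using s unfolding T1_def by auto
        show "((\<lambda>t. - v t) has_real_derivative - ((-4 * \<sigma> 1 * (gA (mu s) + \<sigma> 1 * gB (mu s))) * v s)) (at s within {0..})"
          unfolding v_def by (intro DERIV_minus flow_coord_deriv[OF gf one_in_I s0(1)])
        have "-4 * \<sigma> 1 * (gA (mu s) + \<sigma> 1 * gB (mu s)) > 0" using N[OF s0(2)] s1 by (simp add: mult_pos_neg)
        moreover have "v s \<ge> 0" unfolding v_def by simp
        ultimately show "- ((-4 * \<sigma> 1 * (gA (mu s) + \<sigma> 1 * gB (mu s))) * v s) \<le> 0"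
          by (simp only: neg_le_0_iff_le) (rule mult_nonneg_nonneg, simp_all)
      qed
      then show ?thesis by simp
    qed
    have "(v \<longlongrightarrow> (u 1 \<bullet> p)\<^sup>2) at_top" unfolding v_def by (intro tendsto_intros lim)
    then have vl: "(v \<longlongrightarrow> 0) at_top" using True by simp
    have "v T1 \<le> 0"
    proof (rule tendsto_lowerbound[OF vl])
      show "\<forall>\<^sub>F t in at_top. v T1 \<le> v t" unfolding eventually_at_top_linorder using mono by blast
    qed simp
    then have "u 1 \<bullet> mu T1 = 0" unfolding v_def by simp
    moreover have "T1 \<ge> 0" unfolding T1_def by simp
    ultimately have "u 1 \<bullet> mu0 = 0" using flow_coord_zero_bwd[OF gf one_in_I] by blast
    then show ?thesis using nz by simp
  qed
qed

end


theorem proposition16: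
  fixes lam :: real and L :: nat and S :: "real^'n^'n"
    and \<sigma> :: "nat \<Rightarrow> real" and u :: "nat \<Rightarrow> real^'n"
  assumes lam_pos: "lam > 0"
    and L_ge: "L \<ge> 1"
    and sym: "transpose S = S"
    and posdef: "\<And>x. x \<noteq> 0 \<Longrightarrow> x \<bullet> (S *v x) > 0"
    and simple: "\<And>i j. 1 \<le> i \<Longrightarrow> i < j \<Longrightarrow> j \<le> CARD('n) \<Longrightarrow> \<sigma> j < \<sigma> i"
    and last_pos: "\<sigma> CARD('n) > 0"
    and eigvec: "\<And>i. 1 \<le> i \<Longrightarrow> i \<le> CARD('n) \<Longrightarrow> S *v u i = \<sigma> i *\<^sub>R u i"
    and unit: "\<And>i. 1 \<le> i \<Longrightarrow> i \<le> CARD('n) \<Longrightarrow> norm (u i) = 1"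
  shows
    "filterlim (R_lin lam L S) at_top at_infinity
     \<and> locally_lipschitz (R_lin lam L S)
     \<and> (\<forall>mu0. \<exists>mu. grad_flow (R_lin lam L S) mu mu0)
     \<and> (\<forall>mu0 mu. grad_flow (R_lin lam L S) mu mu0 \<longrightarrow>
          (\<exists>p. critical_point (R_lin lam L S) p \<and> (mu \<longlongrightarrow> p) at_top))
     \<and> {mu. \<forall>nu. R_lin lam L S mu \<le> R_lin lam L S nu}
          = {alpha1_star lam L S (\<sigma> 1) *\<^sub>R u 1, - (alpha1_star lam L S (\<sigma> 1) *\<^sub>R u 1)}
     \<and> negligible {mu0. \<exists>mu. grad_flow (R_lin lam L S) mu mu0 \<and>
          \<not> ((mu \<longlongrightarrow> alpha1_star lam L S (\<sigma> 1) *\<^sub>R u 1) at_top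
             \<or> (mu \<longlongrightarrow> - (alpha1_star lam L S (\<sigma> 1) *\<^sub>R u 1)) at_top)}
     \<and> (\<forall>ms \<in> {alpha1_star lam L S (\<sigma> 1) *\<^sub>R u 1, - (alpha1_star lam L S (\<sigma> 1) *\<^sub>R u 1)}.
          (ms /\<^sub>R norm ms = u 1 \<or> ms /\<^sub>R norm ms = - u 1)
          \<and> \<sigma> 1 = - ((- 2 * trace S
                        + 2 * (lam / real L) * (real L + 2) * trace S * (ms \<bullet> (S *v ms))
                        + (lam / real L) * (real L + 2) * (real L + 3) * (ms \<bullet> ((S ** S) *v ms)))
                      / (- 2 * (real L + 1)
                        + (lam / real L) * (real L + 2) * (real L + 3) * (ms \<bullet> (S *v ms)))))"
proof -
  interpret P: P16 lam L S \<sigma> u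
    by (intro P16.intro) (use lam_pos L_ge sym posdef simple last_pos eigvec unit in auto)
  have c4: "\<forall>mu0 mu. grad_flow (R_lin lam L S) mu mu0 \<longrightarrow>
          (\<exists>p. critical_point (R_lin lam L S) p \<and> (mu \<longlongrightarrow> p) at_top)"
  proof (intro allI impI)
    fix mu0 mu assume gf: "grad_flow (R_lin lam L S) mu mu0"
    obtain p where "P.grad p = 0" "(mu \<longlongrightarrow> p) at_top" using P.flow_converges[OF gf] by blast
    moreover have "critical_point (R_lin lam L S) p"
      unfolding critical_point_def using P.GDERIV_R[of p] \<open>P.grad p = 0\<close> by simp
    ultimately show "\<exists>p. critical_point (R_lin lam L S) p \<and> (mu \<longlongrightarrow> p) at_top" by blast
  qed
  have c6: "negligible {mu0. \<exists>mu. grad_flow (R_lin lam L S) mu mu0 \<and>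
          \<not> ((mu \<longlongrightarrow> alpha1_star lam L S (\<sigma> 1) *\<^sub>R u 1) at_top
             \<or> (mu \<longlongrightarrow> - (alpha1_star lam L S (\<sigma> 1) *\<^sub>R u 1)) at_top)}"
  proof (rule negligible_subset)
    have "u 1 \<noteq> 0" using unit[of 1] by auto
    then show "negligible {x. u 1 \<bullet> x = 0}" by (intro negligible_hyperplane) simp
    show "{mu0. \<exists>mu. grad_flow (R_lin lam L S) mu mu0 \<and>
          \<not> ((mu \<longlongrightarrow> alpha1_star lam L S (\<sigma> 1) *\<^sub>R u 1) at_top
             \<or> (mu \<longlongrightarrow> - (alpha1_star lam L S (\<sigma> 1) *\<^sub>R u 1)) at_top)} \<subseteq> {x. u 1 \<bullet> x = 0}"
      using P.flow_c1 by blast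
  qed
  show ?thesis
    using P.coercive P.loc_lip P.flow_exists c4 P.minimizers c6 P.last_part by blast
qed


end
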